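(* For every $n\geq1$, the following hold in the $q$-shuffle algebra $(\mathbb V,\star)$ (polynomials taken with respect to $\star$): (i) $xC_{n-1}y$ is a homogeneous polynomial in $\tilde G_1,\tilde G_2,\ldots,\tilde G_n$ of total degree $n$, where $\tilde G_k$ is given degree $k$ for $1\le k\le n$; (ii) $\tilde G_n$ is a homogeneous polynomial in $xC_0y,xC_1y,\ldots,xC_{n-1}y$ of total degree $n$, where $xC_{k-1}y$ is given degree $k$ for $1\le k\le n$. Here $xC_{k}y$ denotes the free (concatenation) product and $\tilde G_k=xyxy\cdots xy$ is the word consisting of $k$ consecutive copies of $xy$.
   Context: $\mathbb F$ is a field of characteristic zero and $q\in\mathbb F$ is nonzero and not a root of unity; $[n]_q=(q^n-q^{-n})/(q-q^{-1})$. $\mathbb V$ is the free algebra on noncommuting letters $x,y$; a word is a product of letters (the empty word is $1$), and words form a basis. The $q$-shuffle product $\star$ on $\mathbb V$ is the bilinear product with $1\star v=v\star 1=v$ and, for nontrivial words $u=u_1\cdots u_r$, $v=v_1\cdots v_s$ (letters $u_i,v_j$), $u\star v=u_1\bigl((u_2\cdots u_r)\star v\bigr)+v_1\bigl(u\star(v_2\cdots v_s)\bigr)q^{(u_1,v_1)+(u_2,v_1)+\cdots+(u_r,v_1)}$, where juxtaposition is concatenation and $(x,x)=(y,y)=2$, $(x,y)=(y,x)=-2$. Set $\overline x=1$, $\overline y=-1$. A word $u_1\cdots u_n$ is Catalan if $\overline u_1+\cdots+\overline u_i\ge0$ for $1\le i\le n-1$ and $=0$ for $i=n$. For $n\in\mathbb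 N$, $C_n=\sum u_1u_2\cdots u_{2n}\,[1]_q[1+\overline u_1]_q[1+\overline u_1+\overline u_2]_q\cdots[1+\overline u_1+\cdots+\overline u_{2n}]_q$, summed over all Catalan words of length $2n$ (so $C_0=1$). *)

theory Defs
  imports Main "HOL-Library.Poly_Mapping"
begin

text \<open>Letters x, y; words are lists of letters; the free algebra V over a field
 with coefficients in 'a is represented by finitely supported maps word \<Rightarrow>0 'a
 (a word w is the basis element Poly_Mapping.single w 1).\<close>

datatype letter = X | Y

type_synonym 'a vec = "letter list \<Rightarrow>\<^sub>0 'a"

definition wd :: "letter list \<Rightarrow> 'a::field vec" where
  "wd w = Poly_Mapping.single w 1"

definition scal :: "'a::field \<Rightarrow> 'a vec \<Rightarrow> 'a vec" where
  "scal c f = Poly_Mapping.map (\<lambda>a. c * a) f"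

definition conc :: "'a::field vec \<Rightarrow> 'a vec \<Rightarrow> 'a vec" where
  "conc f g = (\<Sum>u\<in>Poly_Mapping.keys f. \<Sum>v\<in>Poly_Mapping.keys g.
      scal (Poly_Mapping.lookup f u * Poly_Mapping.lookup g v) (wd (u @ v)))"

fun pairing :: "letter \<Rightarrow> letter \<Rightarrow> int" where
  "pairing a b = (if a = b then 2 else -2)"

fun qsh :: "'a::field \<Rightarrow> letter list \<Rightarrow> letter list \<Rightarrow> 'a vec" where
  "qsh q [] v = wd v"
| "qsh q u [] = wd u"
| "qsh q (a # u) (b # v) =
     conc (wd [a]) (qsh q u (b # v))
   + scal (q powi (\<Sum>c\<leftarrow>a # u. pairing c b)) (conc (wd [b]) (qsh q (a # u) v))"

definition star :: "'a::field \<Rightarrow> 'a vec \<Rightarrow> 'a vec \<Rightarrow> 'a vec" where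
  "star q f g = (\<Sum>u\<in>Poly_Mapping.keys f. \<Sum>v\<in>Poly_Mapping.keys g.
      scal (Poly_Mapping.lookup f u * Poly_Mapping.lookup g v) (qsh q u v))"

definition star_list :: "'a::field \<Rightarrow> 'a vec list \<Rightarrow> 'a vec" where
  "star_list q fs = foldr (star q) fs (wd [])"

definition qint :: "'a::field \<Rightarrow> int \<Rightarrow> 'a" where
  "qint q n = (q powi n - q powi (- n)) / (q - inverse q)"

fun bar :: "letter \<Rightarrow> int" where
  "bar X = 1"
| "bar Y = -1"

definition catalan :: "letter list \<Rightarrow> bool" where
  "catalan w = ((\<forall>i. 1 \<le> i \<and> i \<le> length w - 1 \<longrightarrow> sum_list (map bar (take i w)) \<ge> 0)
               \<and> sum_list (map bar w) = 0)"

definition Cat :: "'a::field \<Rightarrow> nat \<Rightarrow> 'a vec" where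
  "Cat q n = (\<Sum>w\<in>{w. length w = 2 * n \<and> catalan w}.
      scal (\<Prod>i\<in>{0..2 * n}. qint q (1 + sum_list (map bar (take i w)))) (wd w))"

definition xCy :: "'a::field \<Rightarrow> nat \<Rightarrow> 'a vec" where
  "xCy q k = conc (wd [X]) (conc (Cat q k) (wd [Y]))"

definition Gt :: "nat \<Rightarrow> 'a::field vec" where
  "Gt k = wd (concat (replicate k [X, Y]))"

text \<open>Compositions of n: exponent sequences of the (noncommutative) monomials of
 weighted degree n in generators of degrees 1,2,...\<close>
definition compositions :: "nat \<Rightarrow> nat list set" where
  "compositions n = {ks. sum_list ks = n \<and> (\<forall>k\<in>set ks. 0 < k)}"

end

theory Submission
  imports Defs
begin


abbreviation lk :: "'a::field vec \<Rightarrow> letter list \<Rightarrow> 'a" where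
  "lk f w \<equiv> Poly_Mapping.lookup f w"

lemma lk_scal[simp]: "lk (scal c f) w = c * lk f w"
  by (simp add: scal_def map.rep_eq when_def)

lemma lk_wd: "lk (wd u) w = (if u = w then 1 else 0)"
  by (simp add: wd_def lookup_single when_def)

lemma keys_wd[simp]: "Poly_Mapping.keys (wd u :: 'a::field vec) = {u}"
  by (simp add: wd_def)

lemma lk_conc_wd: "lk (conc (wd [a]) f) w =
   (case w of [] \<Rightarrow> 0 | b # w' \<Rightarrow> if b = a then lk f w' else 0)"
proof -
  have "lk (conc (wd [a]) f) w = (\<Sum>v\<in>Poly_Mapping.keys f. lk f v * (if a # v = w then 1 else 0))"
    by (simp add: conc_def lookup_sum lk_wd)
  also have "\<dots> = (case w of [] \<Rightarrow> 0 | b # w' \<Rightarrow> if b = a then lk f w' else 0)"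
  proof (cases w)
    case Nil then show ?thesis by simp
  next
    case (Cons b w')
    show ?thesis
    proof (cases "b = a")
      case True
      have "(\<Sum>v\<in>Poly_Mapping.keys f. lk f v * (if a # v = w then 1 else 0))
          = (\<Sum>v\<in>Poly_Mapping.keys f. if v = w' then lk f v else 0)"
        by (rule sum.cong) (auto simp: Cons True)
      also have "\<dots> = lk f w'" by (simp add: sum.delta in_keys_iff)
      finally show ?thesis by (simp add: Cons True)
    next
      case False then show ?thesis by (simp add: Cons)
    qed
  qed
  finally show ?thesis .
qed

lemma qsh_Nil2[simp]: "qsh q u [] = wd u"
  by (cases u) auto

lemma lk_qsh_Nil: "lk (qsh q u v) [] = (if u = [] \<and> v = [] then 1 else 0)"
proof (cases u)
  case Nil then show ?thesis by (simp add: lk_wd)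
next
  case (Cons c u')
  then show ?thesis
    by (cases v) (simp_all add: lk_wd lookup_add lk_conc_wd del: pairing.simps)
qed

definition wt :: "letter \<Rightarrow> letter list \<Rightarrow> int" where
  "wt a u = (\<Sum>c\<leftarrow>u. pairing c a)"

definition hpart :: "letter \<Rightarrow> letter list \<Rightarrow> (letter list \<Rightarrow> 'b::field) \<Rightarrow> 'b" where
  "hpart a u F = (case u of [] \<Rightarrow> 0 | c # u' \<Rightarrow> if c = a then F u' else 0)"

lemma hpart_simps[simp]: "hpart a [] F = 0" "hpart a (c # u) F = (if c = a then F u else 0)"
  by (simp_all add: hpart_def)

lemma lk_qsh_Cons: "lk (qsh q u v) (a # w) =
    hpart a u (\<lambda>u'. lk (qsh q u' v) w) + hpart a v (\<lambda>v'. q powi wt a u * lk (qsh q u v') w)"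
proof (cases u)
  case Nil
  then show ?thesis by (cases v) (auto simp: lk_wd wt_def)
next
  case (Cons c u')
  show ?thesis
  proof (cases v)
    case Nil then show ?thesis using Cons by (simp add: lk_wd)
  next
    case (Cons b v')
    have "lk (qsh q u v) (a # w) = (if c = a then lk (qsh q u' (b # v')) w else 0)
       + q powi (\<Sum>x\<leftarrow>c # u'. pairing x b) * (if b = a then lk (qsh q (c # u') v') w else 0)"
      unfolding \<open>u = c # u'\<close> Cons qsh.simps(3) lookup_add lk_scal lk_conc_wd by simp
    also have "\<dots> = hpart a u (\<lambda>u'. lk (qsh q u' v) w) + hpart a v (\<lambda>v'. q powi wt a u * lk (qsh q u v') w)"
      unfolding \<open>u = c # u'\<close> Cons hpart_simps wt_def by (cases "b = a") simp_all
    finally show ?thesis .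
  qed
qed

lemma hpart_mult: "c * hpart a u F = hpart a u (\<lambda>x. c * F x)"
  by (cases u) simp_all

lemma hpart_add: "hpart a u F + hpart a u G = hpart a u (\<lambda>x. F x + G x)"
  by (cases u) simp_all

lemma hpart_sum: "hpart a u (\<lambda>x. \<Sum>v\<in>S. G v x) = (\<Sum>v\<in>S. hpart a u (G v))"
  by (cases u) simp_all

definition dl :: "letter \<Rightarrow> 'a::field vec \<Rightarrow> 'a vec" where
  "dl a f = Abs_poly_mapping (\<lambda>w. lk f (a # w))"

lemma lk_dl[simp]: "lk (dl a f) w = lk f (a # w)"
proof -
  have "{w. lk f (a # w) \<noteq> 0} = Cons a -` Poly_Mapping.keys f" by (auto simp: in_keys_iff)
  moreover have "finite (Cons a -` Poly_Mapping.keys f)"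
    by (rule finite_vimageI) (auto simp: inj_def)
  ultimately show ?thesis by (simp add: dl_def)
qed

definition tw :: "'a::field \<Rightarrow> letter \<Rightarrow> 'a vec \<Rightarrow> 'a vec" where
  "tw q a f = Abs_poly_mapping (\<lambda>u. q powi wt a u * lk f u)"

lemma lk_tw[simp]: "lk (tw q a f) u = q powi wt a u * lk f u"
proof -
  have "{u. q powi wt a u * lk f u \<noteq> 0} \<subseteq> {u. lk f u \<noteq> 0}" by (auto simp del: power_int_mult_distrib_numeral1 power_int_mult_distrib_numeral2)
  then have fin: "finite {u. q powi wt a u * lk f u \<noteq> 0}"
    using finite_subset finite_lookup by blast
  show ?thesis unfolding tw_def lookup_Abs_poly_mapping[OF fin] ..
qed

lemma sum_keys_sub:
  assumes "Poly_Mapping.keys h \<subseteq> Poly_Mapping.keys f"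
  shows "(\<Sum>u\<in>Poly_Mapping.keys f. lk h u * Z u) = (\<Sum>u\<in>Poly_Mapping.keys h. lk h u * Z u)"
  by (rule sum.mono_neutral_right) (auto simp: assms in_keys_iff)

lemma sum_hpart:
  "(\<Sum>u\<in>Poly_Mapping.keys f. lk f u * hpart a u F) = (\<Sum>u\<in>Poly_Mapping.keys (dl a f). lk (dl a f) u * F u)"
proof -
  let ?K = "Poly_Mapping.keys f"
  have kd: "Poly_Mapping.keys (dl a f) = Cons a -` ?K" by (auto simp: in_keys_iff)
  have "(\<Sum>u\<in>?K. lk f u * hpart a u F) = (\<Sum>u\<in>?K. if u \<in> range (Cons a) then lk f u * F (tl u) else 0)"
    by (rule sum.cong) (auto simp: hpart_def split: list.splits)
  also have "\<dots> = (\<Sum>u\<in>?K \<inter> range (Cons a). lk f u * F (tl u))"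
    by (simp add: sum.inter_restrict)
  also have "?K \<inter> range (Cons a) = Cons a ` (Cons a -` ?K)" by auto
  also have "(\<Sum>u\<in>Cons a ` (Cons a -` ?K). lk f u * F (tl u)) = (\<Sum>u\<in>Cons a -` ?K. lk f (a # u) * F u)"
    by (subst sum.reindex) (auto simp: inj_on_def)
  finally show ?thesis by (simp add: kd)
qed

lemma lk_star: "lk (star q f g) w = (\<Sum>u\<in>Poly_Mapping.keys f. \<Sum>v\<in>Poly_Mapping.keys g.
      lk f u * (lk g v * lk (qsh q u v) w))"
  by (simp add: star_def lookup_sum mult.assoc)

lemma star_Nil: "lk (star q f g) [] = lk f [] * lk g []"
proof -
  have inner: "(\<Sum>v\<in>Poly_Mapping.keys g. lk f u * (lk g v * (if u = [] \<and> v = [] then 1 else 0)))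
      = (if u = [] then lk f u * lk g [] else 0)" for u
  proof (cases "u = []")
    case True
    have "(\<Sum>v\<in>Poly_Mapping.keys g. lk f u * (lk g v * (if u = [] \<and> v = [] then 1 else 0)))
       = (\<Sum>v\<in>Poly_Mapping.keys g. if v = [] then lk f u * lk g v else 0)"
      by (rule sum.cong) (auto simp: True)
    also have "\<dots> = lk f u * lk g []" by (simp add: sum.delta in_keys_iff)
    finally show ?thesis using True by simp
  qed simp
  have "lk (star q f g) [] = (\<Sum>u\<in>Poly_Mapping.keys f. if u = [] then lk f u * lk g [] else 0)"
    unfolding lk_star lk_qsh_Nil inner ..
  also have "\<dots> = lk f [] * lk g []" by (simp add: sum.delta in_keys_iff)
  finally show ?thesis .
qed

lemma star_Cons: "lk (star q f g) (a # w) = lk (star q (dl a f) g) w + lk (star q (tw q a f) (dl a g)) w"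
proof -
  let ?Kf = "Poly_Mapping.keys f" and ?Kg = "Poly_Mapping.keys g"
  have "lk (star q f g) (a # w) =
     (\<Sum>u\<in>?Kf. lk f u * hpart a u (\<lambda>u'. \<Sum>v\<in>?Kg. lk g v * lk (qsh q u' v) w)) +
     (\<Sum>u\<in>?Kf. lk f u * (q powi wt a u * (\<Sum>v\<in>?Kg. lk g v * hpart a v (\<lambda>v'. lk (qsh q u v') w))))"
  proof -
    have "lk (star q f g) (a # w) = (\<Sum>u\<in>?Kf. \<Sum>v\<in>?Kg. lk f u * (lk g v * hpart a u (\<lambda>u'. lk (qsh q u' v) w)))
       + (\<Sum>u\<in>?Kf. \<Sum>v\<in>?Kg. lk f u * (lk g v * hpart a v (\<lambda>v'. q powi wt a u * lk (qsh q u v') w)))"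
      unfolding lk_star lk_qsh_Cons by (simp add: distrib_left sum.distrib)
    also have "(\<Sum>u\<in>?Kf. \<Sum>v\<in>?Kg. lk f u * (lk g v * hpart a u (\<lambda>u'. lk (qsh q u' v) w)))
       = (\<Sum>u\<in>?Kf. lk f u * hpart a u (\<lambda>u'. \<Sum>v\<in>?Kg. lk g v * lk (qsh q u' v) w))"
      by (simp add: hpart_sum hpart_mult sum_distrib_left)
    also have "(\<Sum>u\<in>?Kf. \<Sum>v\<in>?Kg. lk f u * (lk g v * hpart a v (\<lambda>v'. q powi wt a u * lk (qsh q u v') w)))
       = (\<Sum>u\<in>?Kf. lk f u * (q powi wt a u * (\<Sum>v\<in>?Kg. lk g v * hpart a v (\<lambda>v'. lk (qsh q u v') w))))"
      by (simp add: hpart_mult sum_distrib_left mult_ac)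
    finally show ?thesis .
  qed
  also have "(\<Sum>u\<in>?Kf. lk f u * hpart a u (\<lambda>u'. \<Sum>v\<in>?Kg. lk g v * lk (qsh q u' v) w))
       = lk (star q (dl a f) g) w"
    unfolding sum_hpart lk_star by (simp add: sum_distrib_left)
  also have "(\<Sum>u\<in>?Kf. lk f u * (q powi wt a u * (\<Sum>v\<in>?Kg. lk g v * hpart a v (\<lambda>v'. lk (qsh q u v') w))))
     = (\<Sum>u\<in>?Kf. lk (tw q a f) u * (\<Sum>v\<in>Poly_Mapping.keys (dl a g). lk (dl a g) v * lk (qsh q u v) w))"
    unfolding sum_hpart by (simp add: mult_ac)
  also have "\<dots> = (\<Sum>u\<in>Poly_Mapping.keys (tw q a f). lk (tw q a f) u * (\<Sum>v\<in>Poly_Mapping.keys (dl a g). lk (dl a g) v * lk (qsh q u v) w))"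
    by (rule sum_keys_sub) (auto simp: in_keys_iff)
  also have "\<dots> = lk (star q (tw q a f) (dl a g)) w"
    unfolding lk_star by (simp add: sum_distrib_left)
  finally show ?thesis .
qed




lemma vec_eqI: "(\<And>w. lk f w = lk g w) \<Longrightarrow> f = g"
  by (rule poly_mapping_eqI)

lemma wt_Nil[simp]: "wt a [] = 0" and wt_Cons[simp]: "wt a (b # u) = pairing b a + wt a u"
  by (simp_all add: wt_def)

declare pairing.simps[simp del]

lemma dl_add[simp]: "dl a (f + g) = dl a f + dl a g"
  by (rule vec_eqI) (simp add: lookup_add)
lemma dl_minus[simp]: "dl a (f - g) = dl a f - dl a g"
  by (rule vec_eqI) (simp add: lookup_minus)
lemma dl_scal[simp]: "dl a (scal c f) = scal c (dl a f)"
  by (rule vec_eqI) simp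
lemma dl_zero[simp]: "dl a 0 = 0"
  by (rule vec_eqI) simp
lemma dl_sum: "dl a (\<Sum>i\<in>S. F i) = (\<Sum>i\<in>S. dl a (F i))"
  by (rule vec_eqI) (simp add: lookup_sum)
lemma dl_one[simp]: "dl a (wd []) = 0"
  by (rule vec_eqI) (simp add: lk_wd)
lemma tw_add[simp]: "tw q a (f + g) = tw q a f + tw q a g"
  by (rule vec_eqI) (simp add: lookup_add distrib_left)
lemma tw_minus[simp]: "tw q a (f - g) = tw q a f - tw q a g"
  by (rule vec_eqI) (simp add: lookup_minus right_diff_distrib)
lemma tw_scal[simp]: "tw q a (scal c f) = scal c (tw q a f)"
  by (rule vec_eqI) (simp add: mult_ac)
lemma tw_zero[simp]: "tw q a 0 = 0"
  by (rule vec_eqI) simp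
lemma tw_one[simp]: "tw q a (wd []) = wd []"
  by (rule vec_eqI) (simp add: lk_wd)

lemma star_add_left: "star q (f + g) h = star q f h + star q g h"
proof -
  have "\<forall>f g h. lk (star q (f + g) h) w = lk (star q f h + star q g h) w" for w
  proof (induction w)
    case Nil then show ?case by (simp add: star_Nil lookup_add distrib_right)
  next
    case (Cons a w)
    then show ?case by (simp add: star_Cons lookup_add)
  qed
  then show ?thesis by (intro vec_eqI) blast
qed

lemma star_add_right: "star q f (g + h) = star q f g + star q f h"
proof -
  have "\<forall>f g h. lk (star q f (g + h)) w = lk (star q f g + star q f h) w" for w
  proof (induction w)
    case Nil then show ?case by (simp add: star_Nil lookup_add distrib_left)
  next
    case (Cons a w)
    then show ?case by (simp add: star_Cons lookup_add)
  qed
  then show ?thesis by (intro vec_eqI) blast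
qed

lemma star_scal_left: "star q (scal c f) h = scal c (star q f h)"
proof -
  have "\<forall>f h. lk (star q (scal c f) h) w = lk (scal c (star q f h)) w" for w
  proof (induction w)
    case Nil then show ?case by (simp add: star_Nil)
  next
    case (Cons a w)
    then show ?case by (simp add: star_Cons distrib_left)
  qed
  then show ?thesis by (intro vec_eqI) blast
qed

lemma star_scal_right: "star q f (scal c h) = scal c (star q f h)"
proof -
  have "\<forall>f h. lk (star q f (scal c h)) w = lk (scal c (star q f h)) w" for w
  proof (induction w)
    case Nil then show ?case by (simp add: star_Nil)
  next
    case (Cons a w)
    then show ?case by (simp add: star_Cons distrib_left)
  qed
  then show ?thesis by (intro vec_eqI) blast
qed

lemma scal_zero_left[simp]: "scal 0 f = 0" by (rule vec_eqI) simp
lemma scal_zero_right[simp]: "scal c 0 = 0" by (rule vec_eqI) simp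
lemma scal_one[simp]: "scal 1 f = f" by (rule vec_eqI) simp
lemma scal_scal[simp]: "scal c (scal d f) = scal (c * d) f" by (rule vec_eqI) simp
lemma scal_add_right: "scal c (f + g) = scal c f + scal c g" by (rule vec_eqI) (simp add: lookup_add distrib_left)
lemma scal_add_left: "scal (c + d) f = scal c f + scal d f" by (rule vec_eqI) (simp add: lookup_add distrib_right)
lemma scal_sum_right: "scal c (\<Sum>i\<in>S. F i) = (\<Sum>i\<in>S. scal c (F i))" by (rule vec_eqI) (simp add: lookup_sum sum_distrib_left)
lemma scal_sum_left: "scal (\<Sum>i\<in>S. c i) f = (\<Sum>i\<in>S. scal (c i) f)" by (rule vec_eqI) (simp add: lookup_sum sum_distrib_right)

lemma star_zero_left[simp]: "star q 0 h = 0"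
  using star_scal_left[of q 0 0 h] by simp
lemma star_zero_right[simp]: "star q f 0 = 0"
  using star_scal_right[of q f 0 0] by simp

lemma star_minus_left: "star q (f - g) h = star q f h - star q g h"
proof -
  have "star q f h = star q (f - g) h + star q g h" using star_add_left[of q "f - g" g h] by simp
  then show ?thesis by (simp add: eq_diff_eq)
qed

lemma star_minus_right: "star q f (g - h) = star q f g - star q f h"
proof -
  have "star q f g = star q f (g - h) + star q f h" using star_add_right[of q f "g - h" h] by simp
  then show ?thesis by (simp add: eq_diff_eq)
qed

lemma star_sum_left: "finite S \<Longrightarrow> star q (\<Sum>i\<in>S. F i) h = (\<Sum>i\<in>S. star q (F i) h)"
  by (induction S rule: finite_induct) (simp_all add: star_add_left)

lemma star_sum_right: "finite S \<Longrightarrow> star q h (\<Sum>i\<in>S. F i) = (\<Sum>i\<in>S. star q h (F i))"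
  by (induction S rule: finite_induct) (simp_all add: star_add_right)

lemma star_unit_right[simp]: "star q f (wd []) = f"
proof -
  have "\<forall>f. lk (star q f (wd [])) w = lk f w" for w
  proof (induction w)
    case Nil then show ?case by (simp add: star_Nil lk_wd)
  next
    case (Cons a w)
    then show ?case by (simp add: star_Cons)
  qed
  then show ?thesis by (intro vec_eqI) blast
qed

lemma star_unit_left[simp]: "star q (wd []) f = f"
proof -
  have "\<forall>f. lk (star q (wd []) f) w = lk f w" for w
  proof (induction w)
    case Nil then show ?case by (simp add: star_Nil lk_wd)
  next
    case (Cons a w)
    then show ?case by (simp add: star_Cons)
  qed
  then show ?thesis by (intro vec_eqI) blast
qed

lemma dl_star: "dl a (star q f g) = star q (dl a f) g + star q (tw q a f) (dl a g)"
  by (rule vec_eqI) (simp add: star_Cons lookup_add)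

lemma tw_tw: "tw q a (tw q b f) = tw q b (tw q a f)"
  by (rule vec_eqI) (simp add: mult_ac)

lemma dl_tw: "q \<noteq> 0 \<Longrightarrow> dl b (tw q a f) = scal (q powi pairing b a) (tw q a (dl b f))"
  by (rule vec_eqI) (simp add: power_int_add mult_ac)

lemma tw_star:
  assumes q: "q \<noteq> 0"
  shows "tw q a (star q f g) = star q (tw q a f) (tw q a g)"
proof -
  have "\<forall>f g. lk (tw q a (star q f g)) w = lk (star q (tw q a f) (tw q a g)) w" for w
  proof (induction w)
    case Nil then show ?case by (simp add: star_Nil)
  next
    case (Cons b w)
    show ?case
    proof (intro allI)
      fix f g
      have "lk (star q (tw q a f) (tw q a g)) (b # w)
         = q powi pairing b a * lk (star q (tw q a (dl b f)) (tw q a g)) w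
           + q powi pairing b a * lk (star q (tw q a (tw q b f)) (tw q a (dl b g))) w"
        by (simp add: star_Cons dl_tw[OF q] star_scal_left star_scal_right tw_tw)
      also have "\<dots> = q powi pairing b a * lk (tw q a (star q (dl b f) g)) w
           + q powi pairing b a * lk (tw q a (star q (tw q b f) (dl b g))) w"
        using Cons.IH by simp
      also have "\<dots> = lk (tw q a (star q f g)) (b # w)"
        by (simp add: star_Cons power_int_add q distrib_left mult_ac)
      finally show "lk (tw q a (star q f g)) (b # w) = lk (star q (tw q a f) (tw q a g)) (b # w)" ..
    qed
  qed
  then show ?thesis by (intro vec_eqI) blast
qed

lemma star_assoc:
  assumes q: "q \<noteq> 0"
  shows "star q (star q f g) h = star q f (star q g h)"
proof -
  have "\<forall>f g h. lk (star q (star q f g) h) w = lk (star q f (star q g h)) w" for w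
  proof (induction w)
    case Nil then show ?case by (simp add: star_Nil)
  next
    case (Cons a w)
    show ?case
    proof (intro allI)
      fix f g h
      have "lk (star q (star q f g) h) (a # w)
        = lk (star q (star q (dl a f) g) h) w + lk (star q (star q (tw q a f) (dl a g)) h) w
          + lk (star q (star q (tw q a f) (tw q a g)) (dl a h)) w"
        by (simp add: star_Cons dl_star tw_star[OF q] star_add_left lookup_add)
      also have "\<dots> = lk (star q (dl a f) (star q g h)) w + lk (star q (tw q a f) (star q (dl a g) h)) w
          + lk (star q (tw q a f) (star q (tw q a g) (dl a h))) w"
        using Cons.IH by simp
      also have "\<dots> = lk (star q f (star q g h)) (a # w)"
        by (simp add: star_Cons dl_star star_add_right lookup_add)
      finally show "lk (star q (star q f g) h) (a # w) = lk (star q f (star q g h)) (a # w)" .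
    qed
  qed
  then show ?thesis by (intro vec_eqI) blast
qed




lemma UNIV_letter: "(UNIV :: letter set) = {X, Y}"
  using letter.exhaust by auto

lemma finite_len: "finite {w :: letter list. length w = L}"
proof -
  have "finite (UNIV :: letter set)" by (simp add: UNIV_letter)
  from finite_lists_length_eq[OF this, of L] show ?thesis by simp
qed

definition mkv :: "(letter list \<Rightarrow> 'a::field) \<Rightarrow> nat \<Rightarrow> 'a vec" where
  "mkv f L = (\<Sum>w\<in>{w. length w = L}. scal (f w) (wd w))"

lemma lk_mkv: "lk (mkv f L) u = (if length u = L then f u else 0)"
proof -
  have "lk (mkv f L) u = (\<Sum>w\<in>{w. length w = L}. f w * (if w = u then 1 else 0))"
    by (simp add: mkv_def lookup_sum lk_wd)
  also have "\<dots> = (\<Sum>w\<in>{w. length w = L}. if w = u then f w else 0)"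
    by (rule sum.cong) auto
  also have "\<dots> = (if length u = L then f u else 0)"
    using finite_len by (simp add: sum.delta')
  finally show ?thesis .
qed

lemma dl_mkv_Suc: "dl a (mkv f (Suc L)) = mkv (\<lambda>w. f (a # w)) L"
  by (rule vec_eqI) (simp add: lk_mkv)

lemma dl_mkv_0: "dl a (mkv f 0) = 0"
  by (rule vec_eqI) (simp add: lk_mkv)

lemma mkv_scal: "mkv (\<lambda>w. c * f w) L = scal c (mkv f L)"
  by (rule vec_eqI) (simp add: lk_mkv)

lemma mkv_zero: "mkv (\<lambda>w. 0) L = 0"
  by (rule vec_eqI) (simp add: lk_mkv)

lemma lk_mkv_Nil: "lk (mkv f L) [] = (if L = 0 then f [] else 0)"
  by (simp add: lk_mkv)

lemma tw_mkv:
  assumes "\<And>w. f w \<noteq> 0 \<Longrightarrow> q powi wt a w = c"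
  shows "tw q a (mkv f L) = scal c (mkv f L)"
proof (rule vec_eqI)
  fix w
  have "q powi wt a w * f w = c * f w" by (cases "f w = 0") (simp_all add: assms)
  then show "lk (tw q a (mkv f L)) w = lk (scal c (mkv f L)) w" by (simp add: lk_mkv)
qed

fun gf :: "bool \<Rightarrow> letter list \<Rightarrow> 'a::field" where
  "gf False [] = 1"
| "gf True [] = 0"
| "gf False (X # w) = gf True w"
| "gf True (Y # w) = gf False w"
| "gf False (Y # w) = 0"
| "gf True (X # w) = 0"

lemma gf_wt: "(gf p w :: 'a::field) \<noteq> 0 \<Longrightarrow> wt a w = (if p then pairing Y a else 0)"
  by (induction p w rule: gf.induct) (cases a; auto simp: pairing.simps)+

lemma gf_len: "(gf p w :: 'a::field) \<noteq> 0 \<Longrightarrow> (odd (length w) \<longleftrightarrow> p)"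
  by (induction p w rule: gf.induct) auto

definition g :: "bool \<Rightarrow> nat \<Rightarrow> 'a::field vec" where
  "g p L = mkv (gf p) L"

lemma g_dl:
  "dl X (g False (Suc L)) = g True L" "dl Y (g False L) = 0"
  "dl X (g True L) = 0" "dl Y (g True (Suc L)) = g False L"
  "dl a (g p 0) = 0"
proof -
  show "dl X (g False (Suc L)) = g True L" by (simp add: g_def dl_mkv_Suc)
  show "dl Y (g True (Suc L)) = g False L" by (simp add: g_def dl_mkv_Suc)
  show "dl a (g p 0) = 0" by (simp add: g_def dl_mkv_0)
  show "dl Y (g False L) = 0" by (cases L) (simp_all add: g_def dl_mkv_Suc dl_mkv_0 mkv_zero)
  show "dl X (g True L) = 0" by (cases L) (simp_all add: g_def dl_mkv_Suc dl_mkv_0 mkv_zero)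
qed

lemma g_tw:
  "tw q a (g False L) = g False L"
  "tw q a (g True L) = scal (q powi pairing Y a) (g True L)"
proof -
  show "tw q a (g False L) = g False L"
  proof -
    have "tw q a (mkv (gf False) L) = scal 1 (mkv (gf False) L)"
      by (rule tw_mkv) (simp add: gf_wt)
    then show ?thesis by (simp add: g_def)
  qed
  show "tw q a (g True L) = scal (q powi pairing Y a) (g True L)"
    unfolding g_def by (rule tw_mkv) (simp add: gf_wt)
qed

lemma g_Nil: "lk (g p L) [] = (if L = 0 \<and> \<not> p then 1 else 0)"
  by (cases p) (simp_all add: g_def lk_mkv_Nil)

lemma g_par: "lk (g p L) w \<noteq> 0 \<Longrightarrow> (odd L \<longleftrightarrow> p)"
  by (auto simp: g_def lk_mkv dest: gf_len split: if_splits)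

definition qi :: "'a::field \<Rightarrow> nat \<Rightarrow> 'a" where
  "qi q h = (q ^ h - inverse q ^ h) / (q - inverse q)"

fun dw :: "'a::field \<Rightarrow> 'a \<Rightarrow> nat \<Rightarrow> letter list \<Rightarrow> 'a" where
  "dw q lam h [] = (if h = 0 then 1 else 0)"
| "dw q lam h (X # w) = (if h = 0 then 0 else lam * qi q (Suc h) * dw q lam (Suc h) w)"
| "dw q lam h (Y # w) = (if h = 0 then 0 else if h = 1 then (if w = [] then 1 else 0)
     else qi q (h - 1) * dw q lam (h - 1) w)"

fun ew :: "'a::field \<Rightarrow> 'a \<Rightarrow> letter list \<Rightarrow> 'a" where
  "ew q lam (X # w) = lam * dw q lam 1 w"
| "ew q lam _ = 0"

definition dv :: "'a::field \<Rightarrow> 'a \<Rightarrow> nat \<Rightarrow> nat \<Rightarrow> 'a vec" where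
  "dv q lam h L = mkv (dw q lam h) L"

definition ev :: "'a::field \<Rightarrow> 'a \<Rightarrow> nat \<Rightarrow> 'a vec" where
  "ev q lam L = mkv (ew q lam) L"

lemma dw0: "dw q lam 0 w = (if w = [] then 1 else 0)"
proof (cases w)
  case (Cons a w') then show ?thesis by (cases a) auto
qed simp

lemma dv0: "dv q lam 0 L = (if L = 0 then wd [] else 0)"
  by (rule vec_eqI) (auto simp: dv_def lk_mkv dw0 lk_wd)

lemma dv_dl:
  "dl X (dv q lam h (Suc L)) = (if h = 0 then 0 else scal (lam * qi q (Suc h)) (dv q lam (Suc h) L))"
  "dl Y (dv q lam h (Suc L)) = (if h = 0 then 0 else if h = 1 then dv q lam 0 L
       else scal (qi q (h - 1)) (dv q lam (h - 1) L))"
  "dl a (dv q lam h 0) = 0"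
proof -
  show "dl X (dv q lam h (Suc L)) = (if h = 0 then 0 else scal (lam * qi q (Suc h)) (dv q lam (Suc h) L))"
    by (simp add: dv_def dl_mkv_Suc mkv_zero flip: mkv_scal)
  show "dl a (dv q lam h 0) = 0" by (simp add: dv_def dl_mkv_0)
  show "dl Y (dv q lam h (Suc L)) = (if h = 0 then 0 else if h = 1 then dv q lam 0 L
       else scal (qi q (h - 1)) (dv q lam (h - 1) L))"
    by (rule vec_eqI) (auto simp: dv_def dl_mkv_Suc lk_mkv dw0)
qed

lemma dv_Nil: "lk (dv q lam h L) [] = (if L = 0 \<and> h = 0 then 1 else 0)"
  by (simp add: dv_def lk_mkv_Nil)

lemma ev_dl:
  "dl X (ev q lam (Suc L)) = scal lam (dv q lam 1 L)"
  "dl Y (ev q lam L) = 0"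
  "dl a (ev q lam 0) = 0"
proof -
  show "dl X (ev q lam (Suc L)) = scal lam (dv q lam 1 L)"
    by (simp add: ev_def dv_def dl_mkv_Suc flip: mkv_scal)
  show "dl a (ev q lam 0) = 0" by (simp add: ev_def dl_mkv_0)
  show "dl Y (ev q lam L) = 0" by (cases L) (simp_all add: ev_def dl_mkv_Suc dl_mkv_0 mkv_zero)
qed

lemma ev_Nil: "lk (ev q lam L) [] = 0"
  by (simp add: ev_def lk_mkv_Nil)

definition conv :: "'a::field \<Rightarrow> (nat \<Rightarrow> 'a vec) \<Rightarrow> (nat \<Rightarrow> 'a vec) \<Rightarrow> nat \<Rightarrow> 'a vec" where
  "conv q f e L = (\<Sum>l\<in>{..L}. star q (f l) (e (L - l)))"

lemma conv_Cons:
  assumes "dl a (f 0) = 0" "dl a (e 0) = 0"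
  shows "lk (conv q f e (Suc L)) (a # w) = lk (conv q (\<lambda>l. dl a (f (Suc l))) e L) w
       + lk (conv q (\<lambda>l. tw q a (f l)) (\<lambda>l. dl a (e (Suc l))) L) w"
proof -
  have "lk (conv q f e (Suc L)) (a # w) = (\<Sum>l\<in>{..Suc L}. lk (star q (dl a (f l)) (e (Suc L - l))) w)
     + (\<Sum>l\<in>{..Suc L}. lk (star q (tw q a (f l)) (dl a (e (Suc L - l)))) w)"
    unfolding conv_def lookup_sum star_Cons by (simp only: sum.distrib)
  also have "(\<Sum>l\<in>{..Suc L}. lk (star q (dl a (f l)) (e (Suc L - l))) w)
      = (\<Sum>l\<in>{..L}. lk (star q (dl a (f (Suc l))) (e (L - l))) w)"
    by (subst sum.atMost_Suc_shift) (simp add: assms)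
  also have "(\<Sum>l\<in>{..Suc L}. lk (star q (tw q a (f l)) (dl a (e (Suc L - l)))) w)
      = (\<Sum>l\<in>{..L}. lk (star q (tw q a (f l)) (dl a (e (Suc (L - l))))) w)"
    by (simp add: assms Suc_diff_le)
  finally show ?thesis by (simp add: conv_def lookup_sum)
qed

lemma conv_Cons0:
  assumes "dl a (f 0) = 0" "dl a (e 0) = 0"
  shows "lk (conv q f e 0) (a # w) = 0"
  by (simp add: conv_def star_Cons assms)

lemma conv_Nil:
  assumes "\<And>l. lk (e l) [] = 0"
  shows "lk (conv q f e L) [] = 0"
  by (simp add: conv_def lookup_sum star_Nil assms)

lemma conv_scal_right: "conv q f (\<lambda>l. scal c (e l)) L = scal c (conv q f e L)"
  by (simp add: conv_def star_scal_right scal_sum_right)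

lemma conv_scal_left: "conv q (\<lambda>l. scal c (f l)) e L = scal c (conv q f e L)"
  by (simp add: conv_def star_scal_left scal_sum_right)

lemma conv_zero_right: "conv q f (\<lambda>l. 0) L = 0"
  by (simp add: conv_def)

lemma conv_zero_left: "conv q (\<lambda>l. 0) e L = 0"
  by (simp add: conv_def)

lemma conv_dv0: "conv q f (dv q lam 0) L = f L"
proof -
  have "conv q f (dv q lam 0) L = (\<Sum>l\<in>{..L}. if l = L then f l else 0)"
    unfolding conv_def by (rule sum.cong) (auto simp: dv0)
  also have "\<dots> = f L" by simp
  finally show ?thesis .
qed




definition RR :: "'a::field \<Rightarrow> 'a \<Rightarrow> bool \<Rightarrow> nat \<Rightarrow> nat \<Rightarrow> 'a vec" where
  "RR q lam p h L = conv q (g p) (dv q lam h) L"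

definition SS :: "'a::field \<Rightarrow> 'a \<Rightarrow> bool \<Rightarrow> nat \<Rightarrow> 'a vec" where
  "SS q lam p L = conv q (g p) (ev q lam) L"

definition NN :: "bool \<Rightarrow> nat \<Rightarrow> 'a::field vec" where
  "NN p L = scal (of_nat ((L + 1) div 2)) (g p L)"

lemma fun_g_dl:
  "(\<lambda>l. dl X (g False (Suc l))) = g True" "(\<lambda>l. dl Y (g False (Suc l))) = (\<lambda>l. 0)"
  "(\<lambda>l. dl X (g True (Suc l))) = (\<lambda>l. 0)" "(\<lambda>l. dl Y (g True (Suc l))) = g False"
  by (simp_all add: g_dl fun_eq_iff)

lemma fun_g_tw:
  "(\<lambda>l. tw q a (g False l)) = g False"
  "(\<lambda>l. tw q a (g True l)) = (\<lambda>l. scal (q powi pairing Y a) (g True l))"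
  by (simp_all add: g_tw fun_eq_iff)

lemma pairing_vals: "pairing Y X = -2" "pairing Y Y = 2"
  by (simp_all add: pairing.simps)

lemma RR_X:
  assumes "h \<ge> 1"
  shows "lk (RR q lam False h (Suc L)) (X # w) = lk (RR q lam True h L) w + lam * qi q (Suc h) * lk (RR q lam False (Suc h) L) w"
    "lk (RR q lam True h (Suc L)) (X # w) = q powi (-2) * (lam * qi q (Suc h)) * lk (RR q lam True (Suc h) L) w"
proof -
  have e: "(\<lambda>l. dl X (dv q lam h (Suc l))) = (\<lambda>l. scal (lam * qi q (Suc h)) (dv q lam (Suc h) l))"
    using assms by (simp add: dv_dl fun_eq_iff)
  show "lk (RR q lam False h (Suc L)) (X # w) = lk (RR q lam True h L) w + lam * qi q (Suc h) * lk (RR q lam False (Suc h) L) w"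
    unfolding RR_def by (simp add: conv_Cons g_dl dv_dl(3) fun_g_dl fun_g_tw e conv_scal_right)
  show "lk (RR q lam True h (Suc L)) (X # w) = q powi (-2) * (lam * qi q (Suc h)) * lk (RR q lam True (Suc h) L) w"
    unfolding RR_def by (simp add: conv_Cons g_dl dv_dl(3) fun_g_dl fun_g_tw e conv_scal_right conv_scal_left conv_zero_left pairing_vals)
qed

lemma RR_Y:
  assumes "h \<ge> 1"
  shows "lk (RR q lam False h (Suc L)) (Y # w) = (if h = 1 then lk (g False L) w else qi q (h - 1) * lk (RR q lam False (h - 1) L) w)"
    "lk (RR q lam True h (Suc L)) (Y # w) = lk (RR q lam False h L) w + q powi 2 * (if h = 1 then lk (g True L) w else qi q (h - 1) * lk (RR q lam True (h - 1) L) w)"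
proof -
  have e: "(\<lambda>l. dl Y (dv q lam h (Suc l))) = (if h = 1 then dv q lam 0 else (\<lambda>l. scal (qi q (h - 1)) (dv q lam (h - 1) l)))"
    using assms by (auto simp: dv_dl fun_eq_iff)
  show "lk (RR q lam False h (Suc L)) (Y # w) = (if h = 1 then lk (g False L) w else qi q (h - 1) * lk (RR q lam False (h - 1) L) w)"
    unfolding RR_def by (simp add: conv_Cons g_dl dv_dl(3) fun_g_dl fun_g_tw e conv_scal_right conv_zero_left conv_dv0)
  show "lk (RR q lam True h (Suc L)) (Y # w) = lk (RR q lam False h L) w + q powi 2 * (if h = 1 then lk (g True L) w else qi q (h - 1) * lk (RR q lam True (h - 1) L) w)"
    unfolding RR_def by (simp add: conv_Cons g_dl dv_dl(3) fun_g_dl fun_g_tw e conv_scal_right conv_scal_left conv_dv0 pairing_vals)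
qed

lemma SS_der:
  "lk (SS q lam False (Suc L)) (X # w) = lk (SS q lam True L) w + lam * lk (RR q lam False 1 L) w"
  "lk (SS q lam False (Suc L)) (Y # w) = 0"
  "lk (SS q lam True (Suc L)) (X # w) = q powi (-2) * lam * lk (RR q lam True 1 L) w"
  "lk (SS q lam True (Suc L)) (Y # w) = lk (SS q lam False L) w"
proof -
  have e: "(\<lambda>l. dl X (ev q lam (Suc l))) = (\<lambda>l. scal lam (dv q lam 1 l))"
     "(\<lambda>l. dl Y (ev q lam (Suc l))) = (\<lambda>l. 0)"
    by (simp_all add: ev_dl fun_eq_iff)
  show "lk (SS q lam False (Suc L)) (X # w) = lk (SS q lam True L) w + lam * lk (RR q lam False 1 L) w"
    unfolding SS_def RR_def by (simp add: conv_Cons g_dl ev_dl fun_g_dl fun_g_tw e conv_scal_right)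
  show "lk (SS q lam False (Suc L)) (Y # w) = 0"
    unfolding SS_def by (simp add: conv_Cons g_dl ev_dl fun_g_dl fun_g_tw e conv_zero_right conv_zero_left)
  show "lk (SS q lam True (Suc L)) (X # w) = q powi (-2) * lam * lk (RR q lam True 1 L) w"
    unfolding SS_def RR_def by (simp add: conv_Cons g_dl ev_dl fun_g_dl fun_g_tw e conv_scal_right conv_scal_left conv_zero_left pairing_vals)
  show "lk (SS q lam True (Suc L)) (Y # w) = lk (SS q lam False L) w"
    unfolding SS_def by (simp add: conv_Cons g_dl ev_dl fun_g_dl fun_g_tw e conv_zero_right)
qed

lemma zero_len0:
  "lk (RR q lam p h 0) (a # w) = 0" "lk (SS q lam p 0) (a # w) = 0"
  "lk (g p 0) (a # w) = 0" "lk (NN p 0) (a # w) = 0"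
  by (simp_all add: RR_def SS_def NN_def conv_Cons0 g_dl dv_dl ev_dl) (simp_all add: g_def lk_mkv)

lemma zero_Nil:
  "h \<ge> 1 \<Longrightarrow> lk (RR q lam p h L) [] = 0" "lk (SS q lam p L) [] = 0"
  "lk (g True L) [] = 0" "lk (NN p L) [] = 0"
  by (auto simp: RR_def SS_def NN_def g_Nil dv_Nil ev_Nil intro!: conv_Nil)

lemma g_der:
  "lk (g False (Suc L)) (X # w) = lk (g True L) w" "lk (g False L) (Y # w) = 0"
  "lk (g True L) (X # w) = 0" "lk (g True (Suc L)) (Y # w) = lk (g False L) w"
  by (simp_all flip: lk_dl add: g_dl)

lemma NN_der:
  "lk (NN False (Suc L) :: 'a::field vec) (X # w) = lk (NN True L) w" "lk (NN False L :: 'a::field vec) (Y # w) = 0"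
  "lk (NN True L :: 'a::field vec) (X # w) = 0" "lk (NN True (Suc L) :: 'a::field vec) (Y # w) = lk (NN False L) w + lk (g False L) w"
proof -
  show "lk (NN False L) (Y # w) = 0" "lk (NN True L) (X # w) = 0" by (simp_all add: NN_def g_der)
  show "lk (NN False (Suc L) :: 'a vec) (X # w) = lk (NN True L) w"
  proof (cases "odd L")
    case True
    then have e: "(Suc L + 1) div 2 = (L + 1) div 2" by presburger
    show ?thesis unfolding NN_def lk_scal g_der e ..
  next
    case False
    then have z: "lk (g True L :: 'a vec) w = 0" using g_par by blast
    show ?thesis unfolding NN_def lk_scal g_der z by simp
  qed
  show "lk (NN True (Suc L) :: 'a vec) (Y # w) = lk (NN False L) w + lk (g False L) w"
  proof (cases "even L")
    case True
    then have e: "(Suc L + 1) div 2 = (L + 1) div 2 + 1" by presburger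
    show ?thesis unfolding NN_def lk_scal g_der e of_nat_add of_nat_1 by (simp add: distrib_right)
  next
    case False
    then have z: "lk (g False L :: 'a vec) w = 0" using g_par by blast
    show ?thesis unfolding NN_def lk_scal g_der z by simp
  qed
qed


lemma qi_0[simp]: "qi q 0 = 0" by (simp add: qi_def)

lemma qi_1: assumes "q \<noteq> 0" "q - inverse q \<noteq> 0" shows "qi q 1 = 1"
  using assms by (simp add: qi_def)

lemma qi_rec1: assumes "q \<noteq> 0" "q - inverse q \<noteq> 0"
  shows "qi q (Suc n) = inverse q * qi q n + q ^ n"
proof -
  have "q ^ Suc n - inverse q ^ Suc n = inverse q * (q ^ n - inverse q ^ n) + q ^ n * (q - inverse q)"
    using assms(1) by (simp add: algebra_simps)
  then show ?thesis using assms unfolding qi_def by (simp add: field_simps)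
qed

lemma qi_rec2: assumes "q \<noteq> 0" "q - inverse q \<noteq> 0"
  shows "qi q (Suc n) = q * qi q n + inverse q ^ n"
proof -
  have "q ^ Suc n - inverse q ^ Suc n = q * (q ^ n - inverse q ^ n) + inverse q ^ n * (q - inverse q)"
    using assms(1) by (simp add: algebra_simps)
  then show ?thesis using assms unfolding qi_def by (simp add: field_simps)
qed

definition P1 :: "'a::field \<Rightarrow> nat \<Rightarrow> letter list \<Rightarrow> bool" where
  "P1 q L w \<longleftrightarrow> lk (RR q (-q) False 1 L) w = lk (g True L) w"
definition P2 :: "'a::field \<Rightarrow> nat \<Rightarrow> nat \<Rightarrow> letter list \<Rightarrow> bool" where
  "P2 q h L w \<longleftrightarrow> qi q h * lk (RR q (-q) True h L) w = q ^ h * qi q (Suc h) * lk (RR q (-q) False (Suc h) L) w"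
definition P3 :: "'a::field \<Rightarrow> nat \<Rightarrow> nat \<Rightarrow> letter list \<Rightarrow> bool" where
  "P3 q h L w \<longleftrightarrow> qi q h * lk (RR q (- inverse q) True h L) w
     = q ^ (2 * h) * lk (RR q (-q) False (Suc h) L) w + q ^ (h - 1) * qi q h * lk (RR q (- inverse q) False (Suc h) L) w"
definition PG :: "'a::field \<Rightarrow> nat \<Rightarrow> letter list \<Rightarrow> bool" where
  "PG q L w \<longleftrightarrow> lk (SS q (- inverse q) True L) w - lk (SS q (-q) True L) w
     - inverse q * lk (RR q (- inverse q) False 1 L) w + q * lk (RR q (-q) False 1 L) w
     = (q - inverse q) * lk (NN True L :: 'a vec) w"
definition PD :: "'a::field \<Rightarrow> nat \<Rightarrow> letter list \<Rightarrow> bool" where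
  "PD q L w \<longleftrightarrow> lk (SS q (- inverse q) False L) w - lk (SS q (-q) False L) w
     = (q - inverse q) * lk (NN False L :: 'a vec) w"


lemma alg_A1X: fixes q :: "'a::field"
  assumes "e = T + (-q) * d2 * x" "d1 * T = q ^ 1 * d2 * x" "d1 = 1" shows "e = 0"
  using assms by algebra

lemma alg_A2X: fixes q :: "'a::field"
  assumes "e1 = pm2 * ((-q) * d1) * T" "e2 = T + (-q) * d2 * x" "d1 * T = Pq * d2 * x" "Pq = q * P"
    "q * r = 1" "pm2 = r^2" "d1 = r * dh + P" "d2 = r * d1 + Pq"
  shows "dh * e1 = P * d1 * e2"
  using assms by algebra

lemma alg_A3X: fixes q :: "'a::field"
  assumes "e1 = pm2 * ((-r) * d1) * T2" "e2 = T1 + (-q) * d2 * x1" "e3 = T2 + (-r) * d2 * x2"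
    "d1 * T1 = PS * d2 * x1" "d1 * T2 = P2S * x1 + Ph * d1 * x2"
    "Ph = q * Pk" "Phm = Pk" "P2h = q^2 * Pk^2" "P2S = q^4 * Pk^2" "PS = q^2 * Pk"
    "q * r = 1" "pm2 = r^2" "d1 = r * dh + Ph" "d2 = r * d1 + PS"
  shows "d1 * (dh * e1) = d1 * (P2h * e2 + Phm * dh * e3)"
  using assms by algebra

lemma alg_AGX: fixes q :: "'a::field"
  assumes "e1 = pm2 * (-r) * T2" "e2 = pm2 * (-q) * T1" "f1 = T1 + (-q) * d2 * x1" "f2 = T2 + (-r) * d2 * x2"
    "d1 * T1 = q ^ 1 * d2 * x1" "d1 * T2 = q ^ 2 * x1 + q ^ 0 * d1 * x2" "d1 = 1" "d2 = r * d1 + q"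
    "q * r = 1" "pm2 = r^2" "z = 0"
  shows "e1 - e2 - r * f2 + q * f1 = (q - r) * z"
  using assms by algebra

lemma alg_ADX: fixes q :: "'a::field"
  assumes "e1 = s1 + (-r) * x2" "e2 = s2 + (-q) * x1" "s1 - s2 - r * x2 + q * x1 = (q - r) * n" "z = n"
  shows "e1 - e2 = (q - r) * z"
  using assms by algebra

lemma alg_A2Y1: fixes q :: "'a::field"
  assumes "e1 = y + pp * gg" "e2 = dh * y" "y = gg" "dh = 1" "d1 = r * dh + P" "P = q" "pp = q^2" "q * r = 1"
  shows "dh * e1 = P * d1 * e2"
  using assms by algebra

lemma alg_A2Y: fixes q :: "'a::field"
  assumes "e1 = y + pp * (dk * Tk)" "e2 = dh * y" "dk * Tk = Pk * dh * y" "d1 = q * dh + rh" "Ph = q * Pk"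
    "Ph * rh = 1" "pp = q^2"
  shows "dh * e1 = Ph * d1 * e2"
  using assms by algebra

lemma alg_A3Y1: fixes q :: "'a::field"
  assumes "e1 = y2 + pp * gg" "e2 = dh * y1" "e3 = dh * y2" "y1 = gg" "dh = 1" "P2h = q^2" "Phm = 1" "pp = q^2"
  shows "dh * e1 = P2h * e2 + Phm * dh * e3"
  using assms by algebra

lemma alg_A3Y: fixes q :: "'a::field"
  assumes "e1 = y2 + pp * (dk * Tk)" "e2 = dh * y1" "e3 = dh * y2" "dk * Tk = P2k * y1 + Pj * dk * y2"
    "P2h = q^2 * P2k" "Phm = q * Pj" "dh = q * dk + rk" "Pk * rk = 1" "Pk = q * Pj" "pp = q^2"
  shows "dh * e1 = P2h * e2 + Phm * dh * e3"
  using assms by algebra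

lemma alg_AGY: fixes q :: "'a::field"
  assumes "e1 = s1" "e2 = s2" "f1 = gg" "f2 = gg" "s1 - s2 = (q - r) * n" "z = n + gg"
  shows "e1 - e2 - r * f2 + q * f1 = (q - r) * z"
proof -
  have "s1 = s2 + (q - r) * n" using assms(5) by (simp add: algebra_simps)
  then show ?thesis using assms(1-4,6) by (simp add: algebra_simps)
qed

lemma rel_main:
  fixes q :: "'a::field"
  assumes q0: "q \<noteq> 0" and qq: "q - inverse q \<noteq> 0" and nz: "\<And>n. n \<ge> 1 \<Longrightarrow> qi q n \<noteq> 0"
  shows "\<forall>L. (\<forall>h\<ge>1. P2 q h L w \<and> P3 q h L w) \<and> P1 q L w \<and> PG q L w \<and> PD q L w"
proof (induction w)
  case Nil
  show ?case by (simp add: P1_def P2_def P3_def PG_def PD_def zero_Nil)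
next
  case (Cons a w)
  have r: "q * inverse q = 1" using q0 by simp
  have pm2: "q powi (-2) = inverse q ^ 2" by (simp add: power_int_minus power_inverse)
  have pp2: "q powi 2 = q ^ 2" by simp
  have d1: "qi q 1 = 1" using qi_1[OF q0 qq] .
  have r1: "qi q (Suc n) = inverse q * qi q n + q ^ n" for n using qi_rec1[OF q0 qq] .
  have r2: "qi q (Suc n) = q * qi q n + inverse q ^ n" for n using qi_rec2[OF q0 qq] .
  have qr: "q ^ n * inverse q ^ n = 1" for n using q0 by (simp add: power_mult_distrib[symmetric])
  show ?case
  proof (intro allI)
    fix L
    show "(\<forall>h\<ge>1. P2 q h L (a # w) \<and> P3 q h L (a # w)) \<and> P1 q L (a # w) \<and> PG q L (a # w) \<and> PD q L (a # w)"
    proof (cases L)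
      case 0
      then show ?thesis by (simp add: P1_def P2_def P3_def PG_def PD_def zero_len0)
    next
      case (Suc L')
      from Cons.IH have IH2: "\<And>h. h \<ge> 1 \<Longrightarrow> P2 q h L' w" and IH3: "\<And>h. h \<ge> 1 \<Longrightarrow> P3 q h L' w"
        and IH1: "P1 q L' w" and IHG: "PG q L' w" and IHD: "PD q L' w" by auto
      show ?thesis
      proof (cases a)
        case X
        have A1: "P1 q L (a # w)"
        proof -
          have e: "lk (RR q (-q) False 1 (Suc L')) (X # w) = lk (RR q (-q) True 1 L') w + (-q) * qi q 2 * lk (RR q (-q) False 2 L') w"
            using RR_X(1)[of 1 q "-q" L' w] by (simp add: numeral_2_eq_2)
          have i: "qi q 1 * lk (RR q (-q) True 1 L') w = q ^ 1 * qi q 2 * lk (RR q (-q) False 2 L') w"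
            using IH2[of 1] by (simp add: P2_def numeral_2_eq_2)
          show ?thesis unfolding P1_def Suc X g_der by (rule alg_A1X[OF e i d1])
        qed
        have A2: "P2 q h L (a # w)" if h: "h \<ge> 1" for h
        proof -
          have e1: "lk (RR q (-q) True h (Suc L')) (X # w) = q powi (-2) * ((-q) * qi q (Suc h)) * lk (RR q (-q) True (Suc h) L') w"
            using RR_X(2)[OF h] .
          have e2: "lk (RR q (-q) False (Suc h) (Suc L')) (X # w) = lk (RR q (-q) True (Suc h) L') w + (-q) * qi q (Suc (Suc h)) * lk (RR q (-q) False (Suc (Suc h)) L') w"
            by (rule RR_X(1)) simp
          have i: "qi q (Suc h) * lk (RR q (-q) True (Suc h) L') w = q ^ Suc h * qi q (Suc (Suc h)) * lk (RR q (-q) False (Suc (Suc h)) L') w"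
            using IH2[of "Suc h"] by (simp add: P2_def)
          have pS: "q ^ Suc h = q * q ^ h" by simp
          show ?thesis unfolding P2_def Suc X
            by (rule alg_A2X[OF e1 e2 i pS r pm2 r1[of h] r1[of "Suc h"]])
        qed
        have A3: "P3 q h L (a # w)" if h: "h \<ge> 1" for h
        proof -
          obtain k where k: "h = Suc k" using h by (cases h) auto
          have e1: "lk (RR q (- inverse q) True h (Suc L')) (X # w) = q powi (-2) * ((- inverse q) * qi q (Suc h)) * lk (RR q (- inverse q) True (Suc h) L') w"
            using RR_X(2)[OF h] .
          have e2: "lk (RR q (-q) False (Suc h) (Suc L')) (X # w) = lk (RR q (-q) True (Suc h) L') w + (-q) * qi q (Suc (Suc h)) * lk (RR q (-q) False (Suc (Suc h)) L') w"
            by (rule RR_X(1)) simp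
          have e3: "lk (RR q (- inverse q) False (Suc h) (Suc L')) (X # w) = lk (RR q (- inverse q) True (Suc h) L') w + (- inverse q) * qi q (Suc (Suc h)) * lk (RR q (- inverse q) False (Suc (Suc h)) L') w"
            by (rule RR_X(1)) simp
          have i2: "qi q (Suc h) * lk (RR q (-q) True (Suc h) L') w = q ^ Suc h * qi q (Suc (Suc h)) * lk (RR q (-q) False (Suc (Suc h)) L') w"
            using IH2[of "Suc h"] by (simp add: P2_def)
          have i3: "qi q (Suc h) * lk (RR q (- inverse q) True (Suc h) L') w = q ^ (2 * Suc h) * lk (RR q (-q) False (Suc (Suc h)) L') w + q ^ h * qi q (Suc h) * lk (RR q (- inverse q) False (Suc (Suc h)) L') w"
            using IH3[of "Suc h"] by (simp add: P3_def)
          have sq: "q ^ (2 * n) = (q ^ n)^2" for n by (simp add: power_mult[symmetric] mult.commute)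
          have pw: "q ^ h = q * q ^ k" "q ^ (h - 1) = q ^ k" "q ^ (2 * h) = q^2 * (q ^ k)^2" "q ^ (2 * Suc h) = q^4 * (q ^ k)^2" "q ^ Suc h = q^2 * q ^ k"
            by (simp_all add: sq k power_mult_distrib eval_nat_numeral mult_ac power_add)
          have "qi q (Suc h) * (qi q h * lk (RR q (- inverse q) True h L) (a # w))
             = qi q (Suc h) * (q ^ (2 * h) * lk (RR q (-q) False (Suc h) L) (a # w) + q ^ (h - 1) * qi q h * lk (RR q (- inverse q) False (Suc h) L) (a # w))"
            unfolding Suc X
            by (rule alg_A3X[OF e1 e2 e3 i2 i3 pw r pm2 r1[of h] r1[of "Suc h"]])
          then show ?thesis unfolding P3_def using nz[of "Suc h"] by simp
        qed
        have AG: "PG q L (a # w)"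
        proof -
          have e1: "lk (SS q (- inverse q) True (Suc L')) (X # w) = q powi (-2) * (- inverse q) * lk (RR q (- inverse q) True 1 L') w"
            by (rule SS_der(3))
          have e2: "lk (SS q (-q) True (Suc L')) (X # w) = q powi (-2) * (-q) * lk (RR q (-q) True 1 L') w"
            by (rule SS_der(3))
          have f1: "lk (RR q (-q) False 1 (Suc L')) (X # w) = lk (RR q (-q) True 1 L') w + (-q) * qi q 2 * lk (RR q (-q) False 2 L') w"
            using RR_X(1)[of 1 q "-q" L' w] by (simp add: numeral_2_eq_2)
          have f2: "lk (RR q (- inverse q) False 1 (Suc L')) (X # w) = lk (RR q (- inverse q) True 1 L') w + (- inverse q) * qi q 2 * lk (RR q (- inverse q) False 2 L') w"
            using RR_X(1)[of 1 q "- inverse q" L' w] by (simp add: numeral_2_eq_2)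
          have i2: "qi q 1 * lk (RR q (-q) True 1 L') w = q ^ 1 * qi q 2 * lk (RR q (-q) False 2 L') w"
            using IH2[of 1] by (simp add: P2_def numeral_2_eq_2)
          have i3: "qi q 1 * lk (RR q (- inverse q) True 1 L') w = q ^ 2 * lk (RR q (-q) False 2 L') w + q ^ 0 * qi q 1 * lk (RR q (- inverse q) False 2 L') w"
            using IH3[of 1] by (simp add: P3_def numeral_2_eq_2)
          have d2: "qi q 2 = inverse q * qi q 1 + q" using r1[of 1] by (simp add: numeral_2_eq_2)
          have z: "lk (NN True (Suc L') :: 'a vec) (X # w) = 0" by (rule NN_der(3))
          show ?thesis unfolding PG_def Suc X
            by (rule alg_AGX[OF e1 e2 f1 f2 i2 i3 d1 d2 r pm2 z])
        qed
        have AD: "PD q L (a # w)"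
        proof -
          have e1: "lk (SS q (- inverse q) False (Suc L')) (X # w) = lk (SS q (- inverse q) True L') w + (- inverse q) * lk (RR q (- inverse q) False 1 L') w"
            by (rule SS_der(1))
          have e2: "lk (SS q (-q) False (Suc L')) (X # w) = lk (SS q (-q) True L') w + (-q) * lk (RR q (-q) False 1 L') w"
            by (rule SS_der(1))
          have z: "lk (NN False (Suc L') :: 'a vec) (X # w) = lk (NN True L') w" by (rule NN_der(1))
          show ?thesis unfolding PD_def Suc X
            by (rule alg_ADX[OF e1 e2 IHG[unfolded PG_def] z])
        qed
        show ?thesis using A1 A2 A3 AG AD by blast
      next
        case Y
        have A1: "P1 q L (a # w)"
          unfolding P1_def Suc Y g_der using RR_Y(1)[of 1 q "-q" L' w] by simp
        have A2: "P2 q h L (a # w)" if h: "h \<ge> 1" for h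
        proof (cases "h = 1")
          case True
          have e1: "lk (RR q (-q) True h (Suc L')) (Y # w) = lk (RR q (-q) False h L') w + q powi 2 * lk (g True L') w"
            using RR_Y(2)[of h q "-q" L' w] True by simp
          have e2: "lk (RR q (-q) False (Suc h) (Suc L')) (Y # w) = qi q h * lk (RR q (-q) False h L') w"
            using RR_Y(1)[of "Suc h" q "-q" L' w] h by simp
          have i: "lk (RR q (-q) False h L') w = lk (g True L') w" using IH1 True by (simp add: P1_def)
          have dh: "qi q h = 1" using d1 True by simp
          have P: "q ^ h = q" using True by simp
          show ?thesis unfolding P2_def Suc Y
            by (rule alg_A2Y1[OF e1 e2 i dh r1[of h] P pp2 r])
        next
          case False
          obtain k where k: "h = Suc k" "k \<ge> 1" using h False by (cases h) auto
          have e1: "lk (RR q (-q) True h (Suc L')) (Y # w) = lk (RR q (-q) False h L') w + q powi 2 * (qi q k * lk (RR q (-q) True k L') w)"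
            using RR_Y(2)[of h q "-q" L' w] h k by simp
          have e2: "lk (RR q (-q) False (Suc h) (Suc L')) (Y # w) = qi q h * lk (RR q (-q) False h L') w"
            using RR_Y(1)[of "Suc h" q "-q" L' w] h by simp
          have i: "qi q k * lk (RR q (-q) True k L') w = q ^ k * qi q h * lk (RR q (-q) False h L') w"
            using IH2[of k] k by (simp add: P2_def)
          have pw: "q ^ h = q * q ^ k" using k by simp
          show ?thesis unfolding P2_def Suc Y
            by (rule alg_A2Y[OF e1 e2 i r2[of h] pw qr[of h] pp2])
        qed
        have A3: "P3 q h L (a # w)" if h: "h \<ge> 1" for h
        proof (cases "h = 1")
          case True
          have e1: "lk (RR q (- inverse q) True h (Suc L')) (Y # w) = lk (RR q (- inverse q) False h L') w + q powi 2 * lk (g True L') w"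
            using RR_Y(2)[of h q "- inverse q" L' w] True by simp
          have e2: "lk (RR q (-q) False (Suc h) (Suc L')) (Y # w) = qi q h * lk (RR q (-q) False h L') w"
            using RR_Y(1)[of "Suc h" q "-q" L' w] h by simp
          have e3: "lk (RR q (- inverse q) False (Suc h) (Suc L')) (Y # w) = qi q h * lk (RR q (- inverse q) False h L') w"
            using RR_Y(1)[of "Suc h" q "- inverse q" L' w] h by simp
          have i: "lk (RR q (-q) False h L') w = lk (g True L') w" using IH1 True by (simp add: P1_def)
          have dh: "qi q h = 1" using d1 True by simp
          have P: "q ^ (2 * h) = q ^ 2" "q ^ (h - 1) = 1" using True by simp_all
          show ?thesis unfolding P3_def Suc Y
            by (rule alg_A3Y1[OF e1 e2 e3 i dh P pp2])
        next
          case False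
          obtain j where k: "h = Suc (Suc j)" using h False by (cases h; cases "h - 1") auto
          have e1: "lk (RR q (- inverse q) True h (Suc L')) (Y # w) = lk (RR q (- inverse q) False h L') w + q powi 2 * (qi q (Suc j) * lk (RR q (- inverse q) True (Suc j) L') w)"
            using RR_Y(2)[of h q "- inverse q" L' w] h k by simp
          have e2: "lk (RR q (-q) False (Suc h) (Suc L')) (Y # w) = qi q h * lk (RR q (-q) False h L') w"
            using RR_Y(1)[of "Suc h" q "-q" L' w] h by simp
          have e3: "lk (RR q (- inverse q) False (Suc h) (Suc L')) (Y # w) = qi q h * lk (RR q (- inverse q) False h L') w"
            using RR_Y(1)[of "Suc h" q "- inverse q" L' w] h by simp
          have i: "qi q (Suc j) * lk (RR q (- inverse q) True (Suc j) L') w = q ^ (2 * Suc j) * lk (RR q (-q) False h L') w + q ^ j * qi q (Suc j) * lk (RR q (- inverse q) False h L') w"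
            using IH3[of "Suc j"] k by (simp add: P3_def)
          have pw: "q ^ (2 * h) = q^2 * q ^ (2 * Suc j)" "q ^ (h - 1) = q * q ^ j" using k by (simp_all add: power_add power2_eq_square flip: power_mult)
          have rr: "qi q h = q * qi q (Suc j) + inverse q ^ Suc j" using r2[of "Suc j"] k by simp
          have pk: "q ^ Suc j = q * q ^ j" by simp
          show ?thesis unfolding P3_def Suc Y
            by (rule alg_A3Y[OF e1 e2 e3 i pw rr qr[of "Suc j"] pk pp2])
        qed
        have AG: "PG q L (a # w)"
        proof -
          have e1: "lk (SS q (- inverse q) True (Suc L')) (Y # w) = lk (SS q (- inverse q) False L') w"
            by (rule SS_der(4))
          have e2: "lk (SS q (-q) True (Suc L')) (Y # w) = lk (SS q (-q) False L') w"
            by (rule SS_der(4))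
          have f1: "lk (RR q (-q) False 1 (Suc L')) (Y # w) = lk (g False L') w"
            using RR_Y(1)[of 1 q "-q" L' w] by simp
          have f2: "lk (RR q (- inverse q) False 1 (Suc L')) (Y # w) = lk (g False L') w"
            using RR_Y(1)[of 1 q "- inverse q" L' w] by simp
          have z: "lk (NN True (Suc L') :: 'a vec) (Y # w) = lk (NN False L') w + lk (g False L') w" by (rule NN_der(4))
          show ?thesis unfolding PG_def Suc Y
            by (rule alg_AGY[OF e1 e2 f1 f2 IHD[unfolded PD_def] z])
        qed
        have AD: "PD q L (a # w)"
          unfolding PD_def Suc Y NN_der SS_der by simp
        show ?thesis using A1 A2 A3 AG AD by blast
      qed
    qed
  qed
qed




definition S :: "nat \<Rightarrow> letter list \<Rightarrow> int" where
  "S i c = sum_list (map bar (take i c))"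

definition cx :: "letter list \<Rightarrow> nat" where
  "cx c = length (filter (\<lambda>a. a = X) c)"

lemma S_0[simp]: "S 0 c = 0" by (simp add: S_def)
lemma S_Suc_Cons[simp]: "S (Suc i) (a # c) = bar a + S i c" by (simp add: S_def)
lemma cx_simps[simp]: "cx [] = 0" "cx (X # c) = Suc (cx c)" "cx (Y # c) = cx c"
  by (simp_all add: cx_def)

lemma sumbar: "sum_list (map bar c) = 2 * int (cx c) - int (length c)"
proof (induction c)
  case (Cons a c) then show ?case by (cases a) auto
qed simp

lemma S_len: "S (length c) c = 2 * int (cx c) - int (length c)"
  by (simp add: S_def sumbar)

lemma all_le_Suc: "(\<forall>i\<le>Suc n. P i) \<longleftrightarrow> P 0 \<and> (\<forall>i\<le>n. P (Suc i))"
proof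
  assume "\<forall>i\<le>Suc n. P i" then show "P 0 \<and> (\<forall>i\<le>n. P (Suc i))" by auto
next
  assume H: "P 0 \<and> (\<forall>i\<le>n. P (Suc i))"
  show "\<forall>i\<le>Suc n. P i"
  proof (intro allI impI)
    fix i assume "i \<le> Suc n" then show "P i" using H by (cases i) auto
  qed
qed

lemma dw_path:
  "dw q lam (Suc h) (c @ [Y]) = (if (\<forall>i\<le>length c. 0 \<le> int h + S i c) \<and> int h + S (length c) c = 0
     then lam ^ cx c * (\<Prod>i<length c. qi q (nat (1 + int h + S (Suc i) c))) else 0)"
proof (induction c arbitrary: h)
  case Nil
  show ?case by (cases h) auto
next
  case (Cons a c)
  show ?case
  proof (cases a)
    case X
    have c1: "(\<forall>i\<le>length (X # c). 0 \<le> int h + S i (X # c)) \<longleftrightarrow> (\<forall>i\<le>length c. 0 \<le> int (Suc h) + S i c)"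
      unfolding length_Cons all_le_Suc by (simp add: algebra_simps)
    have c2: "int h + S (length (X # c)) (X # c) = int (Suc h) + S (length c) c" by simp
    have c3: "(\<Prod>i<length (X # c). qi q (nat (1 + int h + S (Suc i) (X # c))))
        = qi q (Suc (Suc h)) * (\<Prod>i<length c. qi q (nat (1 + int (Suc h) + S (Suc i) c)))"
      unfolding length_Cons prod.lessThan_Suc_shift by (simp add: algebra_simps nat_add_distrib)
    have "dw q lam (Suc h) ((X # c) @ [Y]) = lam * qi q (Suc (Suc h)) * dw q lam (Suc (Suc h)) (c @ [Y])"
      by simp
    also have "\<dots> = lam * qi q (Suc (Suc h)) * (if (\<forall>i\<le>length c. 0 \<le> int (Suc h) + S i c) \<and> int (Suc h) + S (length c) c = 0
     then lam ^ cx c * (\<Prod>i<length c. qi q (nat (1 + int (Suc h) + S (Suc i) c))) else 0)"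
      by (simp only: Cons.IH[of "Suc h"])
    also have "\<dots> = (if (\<forall>i\<le>length (X # c). 0 \<le> int h + S i (X # c)) \<and> int h + S (length (X # c)) (X # c) = 0
     then lam ^ cx (X # c) * (\<Prod>i<length (X # c). qi q (nat (1 + int h + S (Suc i) (X # c)))) else 0)"
      unfolding c1 c2 c3 by (simp add: mult_ac; blast)
    finally show ?thesis by (simp only: X)
  next
    case Y
    show ?thesis
    proof (cases h)
      case 0
      have "\<not> (\<forall>i\<le>length (a # c). 0 \<le> int h + S i (a # c))"
        by (auto simp: Y 0 intro!: exI[of _ 1])
      then have nc: "\<not> ((\<forall>i\<le>length (a # c). 0 \<le> int h + S i (a # c)) \<and> int h + S (length (a # c)) (a # c) = 0)"
        by blast
      have l: "dw q lam (Suc h) ((a # c) @ [Y]) = 0" by (simp add: Y 0)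
      show ?thesis unfolding l using nc by (simp only: if_False)
    next
      case (Suc h')
      have c1: "(\<forall>i\<le>length (Y # c). 0 \<le> int (Suc h') + S i (Y # c)) \<longleftrightarrow> (\<forall>i\<le>length c. 0 \<le> int h' + S i c)"
        unfolding length_Cons all_le_Suc by (simp add: algebra_simps)
      have c2: "int (Suc h') + S (length (Y # c)) (Y # c) = int h' + S (length c) c" by simp
      have c3: "(\<Prod>i<length (Y # c). qi q (nat (1 + int (Suc h') + S (Suc i) (Y # c))))
          = qi q (Suc h') * (\<Prod>i<length c. qi q (nat (1 + int h' + S (Suc i) c)))"
      proof -
        have n: "nat (1 + int h') = Suc h'" by linarith
        show ?thesis unfolding length_Cons prod.lessThan_Suc_shift by (simp add: algebra_simps n)
      qed
      have "dw q lam (Suc (Suc h')) ((Y # c) @ [Y]) = qi q (Suc h') * dw q lam (Suc h') (c @ [Y])"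
        by simp
      also have "\<dots> = qi q (Suc h') * (if (\<forall>i\<le>length c. 0 \<le> int h' + S i c) \<and> int h' + S (length c) c = 0
         then lam ^ cx c * (\<Prod>i<length c. qi q (nat (1 + int h' + S (Suc i) c))) else 0)"
        by (simp only: Cons.IH[of h'])
      also have "\<dots> = (if (\<forall>i\<le>length (Y # c). 0 \<le> int (Suc h') + S i (Y # c)) \<and> int (Suc h') + S (length (Y # c)) (Y # c) = 0
         then lam ^ cx (Y # c) * (\<Prod>i<length (Y # c). qi q (nat (1 + int (Suc h') + S (Suc i) (Y # c)))) else 0)"
        unfolding c1 c2 c3 by (simp add: mult_ac; blast)
      finally show ?thesis by (simp only: Y Suc)
    qed
  qed
qed


lemma dw_last: "dw q lam h w \<noteq> 0 \<Longrightarrow> (w = [] \<and> h = 0) \<or> (w \<noteq> [] \<and> last w = Y)"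
proof (induction w arbitrary: h)
  case (Cons a w)
  show ?case
  proof (cases a)
    case X
    with Cons.prems have "dw q lam (Suc h) w \<noteq> 0" by (auto split: if_splits)
    from Cons.IH[OF this] show ?thesis by (auto simp: X)
  next
    case Y
    show ?thesis
    proof (cases "w = []")
      case True then show ?thesis by (simp add: Y)
    next
      case False
      with Cons.prems Y have "dw q lam (h - 1) w \<noteq> 0" by (auto split: if_splits)
      from Cons.IH[OF this] False show ?thesis by simp
    qed
  qed
qed (simp split: if_splits)

lemma lk_conc_right: "lk (conc f (wd [b])) w = (if w \<noteq> [] \<and> last w = b then lk f (butlast w) else 0)"
proof -
  have "lk (conc f (wd [b])) w = (\<Sum>u\<in>Poly_Mapping.keys f. lk f u * (if u @ [b] = w then 1 else 0))"
    by (simp add: conc_def lookup_sum lk_wd)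
  also have "\<dots> = (if w \<noteq> [] \<and> last w = b then lk f (butlast w) else 0)"
  proof (cases "w \<noteq> [] \<and> last w = b")
    case True
    then have w: "w = butlast w @ [b]" by (metis append_butlast_last_id)
    have "(\<Sum>u\<in>Poly_Mapping.keys f. lk f u * (if u @ [b] = w then 1 else 0))
        = (\<Sum>u\<in>Poly_Mapping.keys f. if u = butlast w then lk f u else 0)"
      by (rule sum.cong) (auto, metis w butlast_snoc)
    also have "\<dots> = lk f (butlast w)" by (simp add: sum.delta in_keys_iff)
    finally show ?thesis using True by simp
  next
    case False
    have "u @ [b] \<noteq> w" for u using False by auto
    then show ?thesis using False by auto
  qed
  finally show ?thesis .
qed

lemma lk_Cat: "lk (Cat q n) u = (if length u = 2 * n \<and> catalan u
   then (\<Prod>i\<in>{0..2 * n}. qint q (1 + sum_list (map bar (take i u)))) else 0)"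
proof -
  let ?A = "{w. length w = 2 * n \<and> catalan w}"
  have fin: "finite ?A" by (rule finite_subset[OF _ finite_len[of "2 * n"]]) auto
  have "lk (Cat q n) u = (\<Sum>w\<in>?A. (\<Prod>i\<in>{0..2 * n}. qint q (1 + sum_list (map bar (take i w)))) * (if w = u then 1 else 0))"
    by (simp add: Cat_def lookup_sum lk_wd)
  also have "\<dots> = (\<Sum>w\<in>?A. if w = u then (\<Prod>i\<in>{0..2 * n}. qint q (1 + sum_list (map bar (take i w)))) else 0)"
    by (rule sum.cong) auto
  also have "\<dots> = (if length u = 2 * n \<and> catalan u
   then (\<Prod>i\<in>{0..2 * n}. qint q (1 + sum_list (map bar (take i u)))) else 0)"
    using fin by (simp add: sum.delta')
  finally show ?thesis .
qed

lemma lk_xCy: "lk (xCy q k) w = (case w of [] \<Rightarrow> 0 | a # w' \<Rightarrow>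
   if a = X \<and> w' \<noteq> [] \<and> last w' = Y then lk (Cat q k) (butlast w') else 0)"
  by (cases w) (auto simp: xCy_def lk_conc_wd lk_conc_right)

lemma qint_qi: assumes "0 \<le> z" shows "qint q z = qi q (nat z)"
proof -
  have a: "q powi z = q ^ nat z" using assms by (simp add: power_int_def)
  have b: "q powi (- z) = inverse q ^ nat z" using assms by (simp add: power_int_def power_inverse)
  show ?thesis by (simp add: qint_def qi_def a b)
qed

lemma catalan_iff: "catalan c \<longleftrightarrow> (\<forall>i\<le>length c. 0 \<le> S i c) \<and> S (length c) c = 0"
proof
  assume c: "catalan c"
  have tot: "S (length c) c = 0" using c by (simp add: catalan_def S_def)
  moreover have "0 \<le> S i c" if "i \<le> length c" for i
  proof (cases "i = 0 \<or> i = length c")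
    case True then show ?thesis using tot by auto
  next
    case False
    then have "1 \<le> i \<and> i \<le> length c - 1" using that by auto
    then show ?thesis using c by (simp add: catalan_def S_def)
  qed
  ultimately show "(\<forall>i\<le>length c. 0 \<le> S i c) \<and> S (length c) c = 0" by blast
next
  assume H: "(\<forall>i\<le>length c. 0 \<le> S i c) \<and> S (length c) c = 0"
  then show "catalan c" unfolding catalan_def S_def by auto
qed

lemma cat_prod:
  assumes q: "q \<noteq> 0" "q - inverse q \<noteq> 0" and c: "catalan c" and len: "length c = 2 * m"
  shows "(\<Prod>i\<in>{0..2 * m}. qint q (1 + sum_list (map bar (take i c))))
      = (\<Prod>i<length c. qi q (nat (1 + S (Suc i) c)))"
proof -
  have set: "{0..2 * m} = {..<Suc (length c)}" using len by auto
  have nn: "0 \<le> S (Suc i) c" if "i < length c" for i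
    using c that unfolding catalan_iff by auto
  have q1: "qint q 1 = 1" using q by (simp add: qint_def)
  have "(\<Prod>i\<in>{0..2 * m}. qint q (1 + sum_list (map bar (take i c))))
      = (\<Prod>i<Suc (length c). qint q (1 + S i c))" unfolding set S_def ..
  also have "\<dots> = (\<Prod>i<length c. qint q (1 + S (Suc i) c))"
    by (simp only: prod.lessThan_Suc_shift S_0 add_0_right q1 mult_1)
  also have "\<dots> = (\<Prod>i<length c. qi q (nat (1 + S (Suc i) c)))"
    by (rule prod.cong) (auto intro!: qint_qi dest: nn)
  finally show ?thesis .
qed

lemma ev_even:
  fixes q :: "'a::field"
  assumes q: "q \<noteq> 0" "q - inverse q \<noteq> 0" and k: "k \<ge> 1"
  shows "ev q lam (2 * k) = scal (lam ^ k) (xCy q (k - 1))"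
proof (rule vec_eqI)
  fix w
  show "lk (ev q lam (2 * k)) w = lk (scal (lam ^ k) (xCy q (k - 1))) w"
  proof (cases w)
    case Nil then show ?thesis by (simp add: ev_def lk_mkv lk_xCy)
  next
    case (Cons a w')
    show ?thesis
    proof (cases "a = X \<and> w' \<noteq> [] \<and> last w' = Y")
      case False
      have "ew q lam w = 0"
      proof (cases a)
        case X
        then have "w' = [] \<or> last w' \<noteq> Y" using False by auto
        then have "dw q lam 1 w' = 0" using dw_last[of q lam 1 w'] by auto
        then show ?thesis using Cons X by simp
      next
        case Y then show ?thesis using Cons by simp
      qed
      then show ?thesis using False Cons by (auto simp: ev_def lk_mkv lk_xCy)
    next
      case True
      define c where "c = butlast w'"
      have w': "w' = c @ [Y]" using True unfolding c_def by (metis append_butlast_last_id)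
      have lw: "length w = length c + 2" using Cons w' by simp
      have le: "length w = 2 * k \<longleftrightarrow> length c = 2 * (k - 1)" using lw k by auto
      have ew: "ew q lam w = lam * dw q lam (Suc 0) (c @ [Y])" using True Cons w' by simp
      have lhs: "lk (ev q lam (2 * k)) w = (if length c = 2 * (k - 1) then lam * dw q lam (Suc 0) (c @ [Y]) else 0)"
        unfolding ev_def lk_mkv le ew by (rule refl)
      have rhs: "lk (scal (lam ^ k) (xCy q (k - 1))) w = lam ^ k * lk (Cat q (k - 1)) c"
        using True Cons by (simp add: lk_xCy c_def)
      show ?thesis
      proof (cases "length c = 2 * (k - 1) \<and> catalan c")
        case False
        have "\<not> ((\<forall>i\<le>length c. 0 \<le> int 0 + S i c) \<and> int 0 + S (length c) c = 0) \<or> length c \<noteq> 2 * (k - 1)"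
          using False catalan_iff by auto
        then have "lk (ev q lam (2 * k)) w = 0" unfolding lhs dw_path by auto
        moreover have "lk (Cat q (k - 1)) c = 0" unfolding lk_Cat by (rule if_not_P[OF False])
        ultimately show ?thesis using rhs by simp
      next
        case True
        have cnd: "(\<forall>i\<le>length c. 0 \<le> int 0 + S i c) \<and> int 0 + S (length c) c = 0"
          using True catalan_iff by auto
        have cxc: "cx c = k - 1" using cnd True S_len[of c] by simp
        have "lk (ev q lam (2 * k)) w = lam * (lam ^ (k - 1) * (\<Prod>i<length c. qi q (nat (1 + S (Suc i) c))))"
          unfolding lhs dw_path using True cnd cxc by simp
        also have "\<dots> = lam ^ k * (\<Prod>i<length c. qi q (nat (1 + S (Suc i) c)))"
          using k by (cases k) auto
        also have "\<dots> = lk (scal (lam ^ k) (xCy q (k - 1))) w"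
          unfolding rhs lk_Cat using True cat_prod[OF q, of c "k - 1"] by simp
        finally show ?thesis .
      qed
    qed
  qed
qed

lemma ev_odd:
  assumes "odd L" shows "ev q lam L = 0"
proof (rule vec_eqI)
  fix w
  have "ew q lam w = 0" if "length w = L"
  proof (rule ccontr)
    assume nz: "ew q lam w \<noteq> 0"
    obtain a w' where w0: "w = a # w'" using nz by (cases w) auto
    have "a = X" using nz w0 by (cases a) auto
    then have w: "w = X # w'" using w0 by simp
    then have "dw q lam 1 w' \<noteq> 0" using nz by simp
    then have "w' \<noteq> [] \<and> last w' = Y" using dw_last[of q lam 1 w'] by auto
    then obtain c where w': "w' = c @ [Y]" by (metis append_butlast_last_id)
    have "dw q lam (Suc 0) (c @ [Y]) \<noteq> 0" using \<open>dw q lam 1 w' \<noteq> 0\<close> w' by simp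
    then have "S (length c) c = 0" unfolding dw_path by (auto split: if_splits)
    then have "even (length c)" using S_len[of c] by presburger
    moreover have "length w = length c + 2" using w w' by simp
    ultimately have "even L" using that by simp
    then show False using assms by simp
  qed
  then show "lk (ev q lam L) w = lk 0 w" by (simp add: ev_def lk_mkv)
qed

lemma ev_0: "ev q lam 0 = 0"
  by (rule vec_eqI) (simp add: ev_def lk_mkv)

lemma gf_iff: "gf p w = (if (if p then \<exists>m. w = Y # concat (replicate m [X, Y]) else \<exists>m. w = concat (replicate m [X, Y])) then 1 else 0)"
proof (induction w arbitrary: p)
  case Nil
  show ?case by (cases p) auto
next
  case (Cons a w)
  have e1: "(\<exists>m. X # w = concat (replicate m [X, Y])) \<longleftrightarrow> (\<exists>m. w = Y # concat (replicate m [X, Y]))"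
  proof
    assume "\<exists>m. X # w = concat (replicate m [X, Y])"
    then obtain m where m: "X # w = concat (replicate m [X, Y])" by blast
    then obtain m' where "m = Suc m'" by (cases m) auto
    then show "\<exists>m. w = Y # concat (replicate m [X, Y])" using m by auto
  next
    assume "\<exists>m. w = Y # concat (replicate m [X, Y])"
    then obtain m where "w = Y # concat (replicate m [X, Y])" by blast
    then have "X # w = concat (replicate (Suc m) [X, Y])" by simp
    then show "\<exists>m. X # w = concat (replicate m [X, Y])" by blast
  qed
  have e2: "\<not> (\<exists>m. Y # w = concat (replicate m [X, Y]))"
  proof
    assume "\<exists>m. Y # w = concat (replicate m [X, Y])"
    then obtain m where m: "Y # w = concat (replicate m [X, Y])" by blast
    then show False by (cases m) auto
  qed
  show ?case
    by (cases p; cases a) (auto simp: Cons.IH e1 e2)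
qed

lemma g_False_even: "g False (2 * m) = (Gt m :: 'a::field vec)"
proof (rule vec_eqI)
  fix w
  have "(length w = 2 * m \<and> (\<exists>m'. w = concat (replicate m' [X, Y]))) \<longleftrightarrow> w = concat (replicate m [X, Y])"
  proof
    assume "length w = 2 * m \<and> (\<exists>m'. w = concat (replicate m' [X, Y]))"
    then obtain m' where "length w = 2 * m" "w = concat (replicate m' [X, Y])" by blast
    moreover have "length (concat (replicate m' [X, Y])) = 2 * m'" by (induction m') auto
    ultimately show "w = concat (replicate m [X, Y])" by simp
  next
    assume w: "w = concat (replicate m [X, Y])"
    have "length (concat (replicate m [X, Y])) = 2 * m" by (induction m) auto
    then show "length w = 2 * m \<and> (\<exists>m'. w = concat (replicate m' [X, Y]))" using w by blast
  qed
  then show "lk (g False (2 * m)) w = lk (Gt m :: 'a vec) w"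
    by (auto simp: g_def lk_mkv Gt_def lk_wd gf_iff)
qed

lemma g_False_odd: "odd l \<Longrightarrow> g False l = 0"
  by (rule vec_eqI) (use g_par in fastforce)




lemma star_list_Nil[simp]: "star_list q [] = wd []"
  by (simp add: star_list_def)
lemma star_list_Cons[simp]: "star_list q (f # fs) = star q f (star_list q fs)"
  by (simp add: star_list_def)

lemma star_list_snoc: assumes "q \<noteq> 0" shows "star_list q (fs @ [gg]) = star q (star_list q fs) gg"
  by (induction fs) (simp_all add: star_assoc[OF assms])

lemma len_le_sum: "\<forall>k\<in>set ks. 0 < k \<Longrightarrow> length ks \<le> sum_list (ks :: nat list)"
  by (induction ks) auto

lemma finite_comp: "finite (compositions n)"
proof -
  have "compositions n \<subseteq> {ks. set ks \<subseteq> {..n} \<and> length ks \<le> n}"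
    unfolding compositions_def using len_le_sum member_le_sum_list by fastforce
  moreover have "finite {ks. set ks \<subseteq> {..n} \<and> length ks \<le> n}"
    by (rule finite_lists_length_le) simp
  ultimately show ?thesis by (rule finite_subset)
qed

definition PolyIn :: "'a::field \<Rightarrow> (nat \<Rightarrow> 'a vec) \<Rightarrow> nat \<Rightarrow> 'a vec \<Rightarrow> bool" where
  "PolyIn q gen n f \<longleftrightarrow> (\<exists>c. f = (\<Sum>ks\<in>compositions n. scal (c ks) (star_list q (map gen ks))))"

lemma PolyIn_zero: "PolyIn q gen n 0"
  unfolding PolyIn_def by (rule exI[of _ "\<lambda>_. 0"]) simp

lemma PolyIn_add: "PolyIn q gen n f \<Longrightarrow> PolyIn q gen n f2 \<Longrightarrow> PolyIn q gen n (f + f2)"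
  unfolding PolyIn_def
  by (elim exE, rule_tac x="\<lambda>ks. c ks + ca ks" in exI) (simp add: scal_add_left sum.distrib)

lemma PolyIn_scal: "PolyIn q gen n f \<Longrightarrow> PolyIn q gen n (scal a f)"
  unfolding PolyIn_def
  by (elim exE, rule_tac x="\<lambda>ks. a * c ks" in exI) (simp add: scal_sum_right)

lemma vec_diff: "f - f2 = f + scal (-1) (f2 :: 'a::field vec)"
  by (rule vec_eqI) (simp add: lookup_add lookup_minus)

lemma PolyIn_diff: "PolyIn q gen n f \<Longrightarrow> PolyIn q gen n f2 \<Longrightarrow> PolyIn q gen n (f - f2)"
  unfolding vec_diff by (intro PolyIn_add PolyIn_scal)

lemma PolyIn_sum: "finite A \<Longrightarrow> (\<And>i. i \<in> A \<Longrightarrow> PolyIn q gen n (F i)) \<Longrightarrow> PolyIn q gen n (\<Sum>i\<in>A. F i)"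
  by (induction A rule: finite_induct) (auto intro: PolyIn_zero PolyIn_add)

lemma PolyIn_gen: assumes "n \<ge> 1" shows "PolyIn q gen n (gen n)"
proof -
  have mem: "[n] \<in> compositions n" using assms by (simp add: compositions_def)
  have "(\<Sum>ks\<in>compositions n. scal (if ks = [n] then 1 else 0) (star_list q (map gen ks)))
      = (\<Sum>ks\<in>compositions n. if ks = [n] then star_list q (map gen ks) else 0)"
    by (rule sum.cong) auto
  also have "\<dots> = gen n" using mem finite_comp by (simp add: sum.delta')
  finally show ?thesis unfolding PolyIn_def by (intro exI[of _ "\<lambda>ks. if ks = [n] then 1 else 0"]) simp
qed

lemma PolyIn_left:
  assumes m: "m \<ge> 1" and f: "PolyIn q gen n f"
  shows "PolyIn q gen (m + n) (star q (gen m) f)"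
proof -
  obtain c where c: "f = (\<Sum>ks\<in>compositions n. scal (c ks) (star_list q (map gen ks)))"
    using f unfolding PolyIn_def by blast
  define c' where "c' ks = (if ks \<noteq> [] \<and> hd ks = m \<and> tl ks \<in> compositions n then c (tl ks) else 0)" for ks
  have sub: "Cons m ` compositions n \<subseteq> compositions (m + n)"
    using m by (auto simp: compositions_def)
  have "star q (gen m) f = (\<Sum>ks\<in>compositions n. scal (c ks) (star_list q (map gen (m # ks))))"
    unfolding c by (simp add: star_sum_right[OF finite_comp] star_scal_right)
  also have "\<dots> = (\<Sum>ks\<in>compositions n. scal (c' (m # ks)) (star_list q (map gen (m # ks))))"
    by (rule sum.cong) (auto simp: c'_def)
  also have "\<dots> = (\<Sum>ks\<in>Cons m ` compositions n. scal (c' ks) (star_list q (map gen ks)))"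
    by (subst sum.reindex) (auto simp: inj_on_def)
  also have "\<dots> = (\<Sum>ks\<in>compositions (m + n). scal (c' ks) (star_list q (map gen ks)))"
  proof (rule sum.mono_neutral_left[OF finite_comp sub])
    show "\<forall>ks\<in>compositions (m + n) - Cons m ` compositions n. scal (c' ks) (star_list q (map gen ks)) = 0"
    proof
      fix ks assume ks: "ks \<in> compositions (m + n) - Cons m ` compositions n"
      have "c' ks = 0"
      proof (rule ccontr)
        assume "c' ks \<noteq> 0"
        then have "ks \<noteq> [] \<and> hd ks = m \<and> tl ks \<in> compositions n" by (auto simp: c'_def split: if_splits)
        then have "ks \<in> Cons m ` compositions n" by (metis image_eqI list.collapse)
        then show False using ks by blast
      qed
      then show "scal (c' ks) (star_list q (map gen ks)) = 0" by simp
    qed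
  qed
  finally show ?thesis unfolding PolyIn_def by blast
qed

lemma PolyIn_right:
  assumes q: "q \<noteq> 0" and m: "m \<ge> 1" and f: "PolyIn q gen n f"
  shows "PolyIn q gen (n + m) (star q f (gen m))"
proof -
  obtain c where c: "f = (\<Sum>ks\<in>compositions n. scal (c ks) (star_list q (map gen ks)))"
    using f unfolding PolyIn_def by blast
  define c' where "c' ks = (if ks \<noteq> [] \<and> last ks = m \<and> butlast ks \<in> compositions n then c (butlast ks) else 0)" for ks
  have sub: "(\<lambda>ks. ks @ [m]) ` compositions n \<subseteq> compositions (n + m)"
    using m by (auto simp: compositions_def)
  have "star q f (gen m) = (\<Sum>ks\<in>compositions n. scal (c ks) (star_list q (map gen (ks @ [m]))))"
    unfolding c by (simp add: star_sum_left[OF finite_comp] star_scal_left star_list_snoc[OF q])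
  also have "\<dots> = (\<Sum>ks\<in>compositions n. scal (c' (ks @ [m])) (star_list q (map gen (ks @ [m]))))"
    by (rule sum.cong) (auto simp: c'_def)
  also have "\<dots> = (\<Sum>ks\<in>(\<lambda>ks. ks @ [m]) ` compositions n. scal (c' ks) (star_list q (map gen ks)))"
    by (subst sum.reindex) (auto simp: inj_on_def)
  also have "\<dots> = (\<Sum>ks\<in>compositions (n + m). scal (c' ks) (star_list q (map gen ks)))"
  proof (rule sum.mono_neutral_left[OF finite_comp sub])
    show "\<forall>ks\<in>compositions (n + m) - (\<lambda>ks. ks @ [m]) ` compositions n. scal (c' ks) (star_list q (map gen ks)) = 0"
    proof
      fix ks assume ks: "ks \<in> compositions (n + m) - (\<lambda>ks. ks @ [m]) ` compositions n"
      have "c' ks = 0"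
      proof (rule ccontr)
        assume "c' ks \<noteq> 0"
        then have "ks \<noteq> [] \<and> last ks = m \<and> butlast ks \<in> compositions n" by (auto simp: c'_def split: if_splits)
        then have "ks \<in> (\<lambda>ks. ks @ [m]) ` compositions n" by (metis image_eqI append_butlast_last_id)
        then show False using ks by blast
      qed
      then show "scal (c' ks) (star_list q (map gen ks)) = 0" by simp
    qed
  qed
  finally show ?thesis unfolding PolyIn_def by blast
qed


lemma scal_diff_left: "scal (a - b) f = scal a f - scal b (f :: 'a::field vec)"
  by (rule vec_eqI) (simp add: lookup_minus algebra_simps)

lemma main_vec:
  fixes q :: "'a::field"
  assumes q0: "q \<noteq> 0" and qq: "q - inverse q \<noteq> 0" and nz: "\<And>n. n \<ge> 1 \<Longrightarrow> qi q n \<noteq> 0"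
  shows "SS q (- inverse q) False L - SS q (-q) False L = scal (q - inverse q) (NN False L)"
proof (rule vec_eqI)
  fix w
  from rel_main[OF q0 qq nz, of w] have "PD q L w" by blast
  then show "lk (SS q (- inverse q) False L - SS q (-q) False L) w = lk (scal (q - inverse q) (NN False L)) w"
    by (simp add: PD_def lookup_minus)
qed

lemma SS_expand:
  fixes q :: "'a::field"
  assumes q: "q \<noteq> 0" "q - inverse q \<noteq> 0"
  shows "SS q lam False (2 * n) = (\<Sum>m<n. scal (lam ^ (n - m)) (star q (Gt m) (xCy q (n - m - 1))))"
proof -
  define F where "F l = star q (g False l) (ev q lam (2 * n - l))" for l
  have "SS q lam False (2 * n) = (\<Sum>l\<in>{..2 * n}. F l)" by (simp add: SS_def conv_def F_def)
  also have "\<dots> = (\<Sum>l\<in>(\<lambda>m. 2 * m) ` {..<n}. F l)"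
  proof (rule sum.mono_neutral_right)
    show "\<forall>l\<in>{..2 * n} - (\<lambda>m. 2 * m) ` {..<n}. F l = 0"
    proof
      fix l assume l: "l \<in> {..2 * n} - (\<lambda>m. 2 * m) ` {..<n}"
      show "F l = 0"
      proof (cases "odd l")
        case True then show ?thesis by (simp add: F_def g_False_odd)
      next
        case False
        then have "even l" by simp
        then obtain m where m: "l = 2 * m" by (rule evenE)
        then have "m = n" using l by auto
        then show ?thesis by (simp add: F_def m ev_0)
      qed
    qed
  qed auto
  also have "\<dots> = (\<Sum>m<n. F (2 * m))" by (subst sum.reindex) (auto simp: inj_on_def)
  also have "\<dots> = (\<Sum>m<n. scal (lam ^ (n - m)) (star q (Gt m) (xCy q (n - m - 1))))"
  proof (rule sum.cong)
    fix m assume "m \<in> {..<n}"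
    then have m: "n - m \<ge> 1" by auto
    have "2 * n - 2 * m = 2 * (n - m)" by simp
    then show "F (2 * m) = scal (lam ^ (n - m)) (star q (Gt m) (xCy q (n - m - 1)))"
      using ev_even[OF q m, of lam] by (simp add: F_def g_False_even star_scal_right)
  qed simp
  finally show ?thesis .
qed

lemma NN_even: "NN False (2 * n) = scal (of_nat n) (Gt n :: 'a::field vec)"
proof -
  have "(2 * n + 1) div 2 = n" by simp
  then show ?thesis by (simp add: NN_def g_False_even)
qed

lemma key_identity:
  fixes q :: "'a::field"
  assumes q0: "q \<noteq> 0" and qq: "q - inverse q \<noteq> 0" and nz: "\<And>n. n \<ge> 1 \<Longrightarrow> qi q n \<noteq> 0"
  shows "(\<Sum>m<n. scal ((- inverse q) ^ (n - m) - (-q) ^ (n - m)) (star q (Gt m) (xCy q (n - m - 1))))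
     = scal ((q - inverse q) * of_nat n) (Gt n)"
proof -
  have "(\<Sum>m<n. scal ((- inverse q) ^ (n - m) - (-q) ^ (n - m)) (star q (Gt m) (xCy q (n - m - 1))))
     = SS q (- inverse q) False (2 * n) - SS q (-q) False (2 * n)"
    by (simp add: SS_expand[OF q0 qq] scal_diff_left sum_subtractf)
  also have "\<dots> = scal (q - inverse q) (NN False (2 * n))" by (rule main_vec[OF q0 qq nz])
  also have "\<dots> = scal ((q - inverse q) * of_nat n) (Gt n)" by (simp add: NN_even)
  finally show ?thesis .
qed

lemma Gt_0: "Gt 0 = wd []" by (simp add: Gt_def)

theorem corollary9p12:
  fixes q :: "'a::field_char_0" and n :: nat
  assumes "q \<noteq> 0" and "\<forall>m::nat. m > 0 \<longrightarrow> q ^ m \<noteq> 1" and "1 \<le> n"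
  shows "(\<exists>c :: nat list \<Rightarrow> 'a. xCy q (n - 1) =
            (\<Sum>ks\<in>compositions n. scal (c ks) (star_list q (map Gt ks))))
       \<and> (\<exists>c :: nat list \<Rightarrow> 'a. Gt n =
            (\<Sum>ks\<in>compositions n. scal (c ks) (star_list q (map (\<lambda>k. xCy q (k - 1)) ks))))"
proof -
  have q0: "q \<noteq> 0" by fact
  have nr: "q ^ (2 * j) \<noteq> 1" if "j \<ge> 1" for j using assms(2) that by simp
  have qsq: "q ^ j * q ^ j = q ^ (2 * j)" for j by (simp add: power_add[symmetric] mult_2)
  have qq: "q - inverse q \<noteq> 0"
  proof
    assume "q - inverse q = 0"
    then have "q * q = 1" using q0 by (simp add: field_simps)
    then show False using nr[of 1] by (simp add: power2_eq_square)
  qed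
  have nz: "qi q j \<noteq> 0" if "j \<ge> 1" for j
  proof
    assume "qi q j = 0"
    then have "q ^ j = inverse q ^ j" using qq by (simp add: qi_def)
    then have "q ^ j * q ^ j = inverse q ^ j * q ^ j" by simp
    also have "\<dots> = 1" using q0 by (simp add: power_mult_distrib[symmetric])
    finally show False using nr[OF that] qsq by simp
  qed
  have mu: "(- inverse q) ^ j - (-q) ^ j \<noteq> 0" if "j \<ge> 1" for j
  proof
    assume "(- inverse q) ^ j - (-q) ^ j = 0"
    then have e: "(- inverse q) ^ j = (-q) ^ j" by simp
    have "(-q) ^ j * (-q) ^ j = (- inverse q) ^ j * (-q) ^ j" using e by simp
    also have "\<dots> = 1" using q0 by (simp add: power_mult_distrib[symmetric])
    finally have "(q * q) ^ j = 1" by (simp add: power_mult_distrib[symmetric])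
    then show False using nr[OF that] by (simp add: power_mult power2_eq_square)
  qed
  define E where "E k = xCy q (k - 1)" for k
  let ?mu = "\<lambda>j. (- inverse q) ^ j - (-q) ^ j"
  have P: "PolyIn q Gt k (xCy q (k - 1)) \<and> PolyIn q E k (Gt k)" if "1 \<le> k" for k
    using that
  proof (induction k rule: less_induct)
    case (less k)
    define R where "R = (\<Sum>m\<in>{1..<k}. scal (?mu (k - m)) (star q (Gt m) (xCy q (k - m - 1))))"
    have split: "{..<k} = insert 0 {1..<k}" using less.prems by auto
    have K: "scal (?mu k) (xCy q (k - 1)) + R = scal ((q - inverse q) * of_nat k) (Gt k)"
      using key_identity[OF q0 qq nz, of k] unfolding split R_def
      by (simp add: Gt_0)
    have c0: "(q - inverse q) * of_nat k \<noteq> 0" using qq less.prems by simp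
    have m0: "?mu k \<noteq> 0" using mu less.prems by blast
    have I1: "PolyIn q Gt k (xCy q (k - 1))"
    proof -
      have "xCy q (k - 1) = scal (inverse (?mu k)) (scal ((q - inverse q) * of_nat k) (Gt k) - R)"
        using K m0 by (simp flip: K add: eq_diff_eq)
      also have "PolyIn q Gt k \<dots>"
      proof (intro PolyIn_scal PolyIn_diff PolyIn_gen less.prems)
        show "PolyIn q Gt k R" unfolding R_def
        proof (intro PolyIn_sum PolyIn_scal)
          fix m assume m: "m \<in> {1..<k}"
          then have "PolyIn q Gt (k - m) (xCy q (k - m - 1))" using less.IH[of "k - m"] by auto
          from PolyIn_left[OF _ this, of m] m show "PolyIn q Gt k (star q (Gt m) (xCy q (k - m - 1)))" by simp
        qed simp
      qed
      finally show ?thesis .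
    qed
    have I2: "PolyIn q E k (Gt k)"
    proof -
      define C where "C = (q - inverse q) * of_nat k"
      have "scal (inverse C) (scal (?mu k) (xCy q (k - 1)) + R) = scal (inverse C * C) (Gt k)"
        unfolding K C_def by simp
      also have "inverse C * C = 1" using c0 unfolding C_def by (rule left_inverse)
      finally have "Gt k = scal (inverse C) (scal (?mu k) (xCy q (k - 1)) + R)" by simp
      also have "PolyIn q E k \<dots>"
      proof (intro PolyIn_scal PolyIn_add)
        show "PolyIn q E k (xCy q (k - 1))"
          using PolyIn_gen[OF less.prems, of q E] by (simp add: E_def)
        show "PolyIn q E k R" unfolding R_def
        proof (intro PolyIn_sum PolyIn_scal)
          fix m assume m: "m \<in> {1..<k}"
          then have ih: "PolyIn q E m (Gt m)" using less.IH[of m] by auto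
          have km: "1 \<le> k - m" using m by auto
          have "PolyIn q E (m + (k - m)) (star q (Gt m) (E (k - m)))" by (rule PolyIn_right[OF q0 km ih])
          then show "PolyIn q E k (star q (Gt m) (xCy q (k - m - 1)))" using m by (simp add: E_def)
        qed simp
      qed
      finally show ?thesis .
    qed
    show ?case using I1 I2 by blast
  qed
  from P[OF assms(3)] show ?thesis unfolding PolyIn_def E_def by blast
qed


end
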